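(* Let $n\ge 3$. Then for $0\le k<n-1$, $$f(n,k)=\sum_{j=k-1}^{n-2} f(n-1,j),$$ and $$f(n,n-1)=\sum_{j=0}^{n-4}(n-3-j)\,f(n-1,j),$$ with the convention $f(m,-1)=0$.
   Context: A complete non-ambiguous matrix (CNM) of size $n$ is an $n\times n$ matrix $M=(m_{i,j})$ with entries in $\{0,1\}$ whose support $T=\{(i,j): m_{i,j}=1\}$ (whose elements are called vertices) satisfies: (1) $(1,1)\in T$; (2) for every $p=(i,j)\in T$ with $p\neq(1,1)$, exactly one of the following holds: there is $(i',j)\in T$ with $i'<i$, or there is $(i,j')\in T$ with $j'<j$; (3) every row and every column of $M$ contains at least one vertex; (4) define the parent of $p=(i,j)\neq(1,1)$ to be $(i',j)$ with $i'<i$ maximal if such a vertex exists, and otherwise $(i,j')$ with $j'<j$ maximal; then every vertex is the parent of either zero or exactly two vertices. A vertex with no children is a leaf. A CNM of size $n$ is upper-diagonal if its leaves are exactly the positions $(i,n+1-i)$, $1\le i\le n$. For $n\ge 2$ and $0\le k\le n-2$, $f(n,k)$ is the number of upper-diagonal CNMs $M$ of size $n$ with $m_{i,n-i}=0$ for $1\le i\le k$ and $m_{k+1,n-k-1}=1$; $f(n,n-1)$ is the number of upper-diagonal CNMs of size $n$ with $m_{i,n-i}=0$ for all $1\le i\le n-1$; by convention $f(n,-1)=0$. *)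

theory Defs
  imports Main
begin

text \<open>A 0/1 matrix of size n is represented by its support T (the set of vertices),
  a subset of {1..n} x {1..n}; positions are (row, column), 1-based.\<close>

definition cnm_parent :: "(nat \<times> nat) set \<Rightarrow> nat \<times> nat \<Rightarrow> nat \<times> nat" where
  "cnm_parent T p = (case p of (i, j) \<Rightarrow>
     if (\<exists>i'<i. (i', j) \<in> T) then (Max {i'. i' < i \<and> (i', j) \<in> T}, j)
     else (i, Max {j'. j' < j \<and> (i, j') \<in> T}))"

definition cnm_children :: "(nat \<times> nat) set \<Rightarrow> nat \<times> nat \<Rightarrow> (nat \<times> nat) set" where
  "cnm_children T p = {q \<in> T. q \<noteq> (1, 1) \<and> cnm_parent T q = p}"

definition is_CNM :: "nat \<Rightarrow> (nat \<times> nat) set \<Rightarrow> bool" where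
  "is_CNM n T \<longleftrightarrow>
     T \<subseteq> {1..n} \<times> {1..n} \<and>
     (1, 1) \<in> T \<and>
     (\<forall>(i, j) \<in> T. (i, j) \<noteq> (1, 1) \<longrightarrow>
        ((\<exists>i'<i. (i', j) \<in> T) \<noteq> (\<exists>j'<j. (i, j') \<in> T))) \<and>
     (\<forall>i \<in> {1..n}. \<exists>j. (i, j) \<in> T) \<and>
     (\<forall>j \<in> {1..n}. \<exists>i. (i, j) \<in> T) \<and>
     (\<forall>p \<in> T. card (cnm_children T p) = 0 \<or> card (cnm_children T p) = 2)"

definition cnm_leaves :: "(nat \<times> nat) set \<Rightarrow> (nat \<times> nat) set" where
  "cnm_leaves T = {p \<in> T. cnm_children T p = {}}"

definition is_upper_diagonal_CNM :: "nat \<Rightarrow> (nat \<times> nat) set \<Rightarrow> bool" where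
  "is_upper_diagonal_CNM n T \<longleftrightarrow> is_CNM n T \<and>
     cnm_leaves T = {(i, n + 1 - i) | i. 1 \<le> i \<and> i \<le> n}"

definition f :: "nat \<Rightarrow> int \<Rightarrow> nat" where
  "f n k = (if k < 0 then 0
     else if k \<le> int n - 2 then
       card {T. is_upper_diagonal_CNM n T \<and>
                (\<forall>i \<in> {1..nat k}. (i, n - i) \<notin> T) \<and>
                (nat k + 1, n - nat k - 1) \<in> T}
     else if k = int n - 1 then
       card {T. is_upper_diagonal_CNM n T \<and> (\<forall>i \<in> {1..n - 1}. (i, n - i) \<notin> T)}
     else 0)"

end

theory Submission
  imports Defs Complex_Main
begin

definition Q :: "nat \<Rightarrow> (nat \<times> nat) set \<Rightarrow> bool" where
  "Q n T \<longleftrightarrow> T \<subseteq> {(i,j). 1 \<le> i \<and> 1 \<le> j \<and> i + j \<le> Suc n} \<and> (1,1) \<in> T \<and>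
     (\<forall>i. 1 \<le> i \<and> i \<le> n \<longrightarrow> (i, Suc n - i) \<in> T) \<and>
     (\<forall>i j. (i,j) \<in> T \<longrightarrow> (i,j) \<noteq> (1,1) \<longrightarrow> ((\<exists>i'<i. (i',j) \<in> T) \<noteq> (\<exists>j'<j. (i,j') \<in> T)))"

lemma Max_eqI_nat:
  assumes "(a::nat) \<in> A" "\<And>x. x \<in> A \<Longrightarrow> x \<le> a" "finite A"
  shows "Max A = a"
  using assms by (meson Max_eqI)

lemma parent_col:
  assumes "\<exists>i'<i. (i', j) \<in> T"
  shows "cnm_parent T (i,j) = (Max {i'. i' < i \<and> (i', j) \<in> T}, j)"
  using assms unfolding cnm_parent_def by auto

lemma parent_row:
  assumes "\<not>(\<exists>i'<i. (i', j) \<in> T)"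
  shows "cnm_parent T (i,j) = (i, Max {j'. j' < j \<and> (i, j') \<in> T})"
  using assms unfolding cnm_parent_def by auto

lemma parent_less:
  assumes "(i,j) \<in> T" "(i,j) \<noteq> (1,1)"
    "(\<exists>i'<i. (i',j) \<in> T) \<noteq> (\<exists>j'<j. (i,j') \<in> T)"
  shows "fst (cnm_parent T (i,j)) + snd (cnm_parent T (i,j)) < i + j"
proof (cases "\<exists>i'<i. (i', j) \<in> T")
  case True
  let ?A = "{i'. i' < i \<and> (i', j) \<in> T}"
  have fin: "finite ?A" by (rule finite_subset[of _ "{..<i}"]) auto
  have ne: "?A \<noteq> {}" using True by auto
  have "Max ?A \<in> ?A" using Max_in[OF fin ne] .
  then show ?thesis using parent_col[OF True] by auto
next
  case False
  then have ex: "\<exists>j'<j. (i,j') \<in> T" using assms(3) by auto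
  let ?A = "{j'. j' < j \<and> (i, j') \<in> T}"
  have fin: "finite ?A" by (rule finite_subset[of _ "{..<j}"]) auto
  have ne: "?A \<noteq> {}" using ex by auto
  have "Max ?A \<in> ?A" using Max_in[OF fin ne] .
  then show ?thesis using parent_row[OF False] by auto
qed

lemma Q_sub: "Q n T \<Longrightarrow> (i,j) \<in> T \<Longrightarrow> 1 \<le> i \<and> 1 \<le> j \<and> i + j \<le> Suc n"
  unfolding Q_def by auto

lemma Q_xor: "Q n T \<Longrightarrow> (i,j) \<in> T \<Longrightarrow> (i,j) \<noteq> (1,1) \<Longrightarrow> (\<exists>i'<i. (i',j) \<in> T) \<noteq> (\<exists>j'<j. (i,j') \<in> T)"
  unfolding Q_def by blast

lemma child_iff:
  assumes Q: "Q n T" and p: "(a,b) \<in> T"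
  shows "(x,y) \<in> cnm_children T (a,b) \<longleftrightarrow> (x,y) \<in> T \<and>
     ((y = b \<and> a < x \<and> (\<forall>z. a<z \<and> z<x \<longrightarrow> (z,b)\<notin>T)) \<or>
      (x = a \<and> b < y \<and> (\<forall>z. b<z \<and> z<y \<longrightarrow> (a,z)\<notin>T)))"
proof
  assume c: "(x,y) \<in> cnm_children T (a,b)"
  then have xy: "(x,y) \<in> T" "(x,y) \<noteq> (1,1)" "cnm_parent T (x,y) = (a,b)"
    unfolding cnm_children_def by auto
  show "(x,y) \<in> T \<and>
     ((y = b \<and> a < x \<and> (\<forall>z. a<z \<and> z<x \<longrightarrow> (z,b)\<notin>T)) \<or>
      (x = a \<and> b < y \<and> (\<forall>z. b<z \<and> z<y \<longrightarrow> (a,z)\<notin>T)))"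
  proof (cases "\<exists>i'<x. (i', y) \<in> T")
    case True
    let ?A = "{i'. i' < x \<and> (i', y) \<in> T}"
    have fin: "finite ?A" by (rule finite_subset[of _ "{..<x}"]) auto
    have ne: "?A \<noteq> {}" using True by auto
    have m: "Max ?A \<in> ?A" using Max_in[OF fin ne] .
    have e: "Max ?A = a" "y = b" using parent_col[OF True] xy(3) by auto
    have "\<forall>z. a<z \<and> z<x \<longrightarrow> (z,b)\<notin>T"
    proof (intro allI impI)
      fix z assume "a<z \<and> z<x"
      show "(z,b)\<notin>T"
      proof
        assume "(z,b) \<in> T"
        then have "z \<in> ?A" using \<open>a<z \<and> z<x\<close> e by auto
        then have "z \<le> Max ?A" using fin by auto
        then show False using e \<open>a<z \<and> z<x\<close> by auto
      qed
    qed
    then show ?thesis using xy m e by auto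
  next
    case False
    then have ex: "\<exists>j'<y. (x,j') \<in> T" using Q_xor[OF Q xy(1,2)] by auto
    let ?A = "{j'. j' < y \<and> (x, j') \<in> T}"
    have fin: "finite ?A" by (rule finite_subset[of _ "{..<y}"]) auto
    have ne: "?A \<noteq> {}" using ex by auto
    have m: "Max ?A \<in> ?A" using Max_in[OF fin ne] .
    have e: "Max ?A = b" "x = a" using parent_row[OF False] xy(3) by auto
    have "\<forall>z. b<z \<and> z<y \<longrightarrow> (a,z)\<notin>T"
    proof (intro allI impI)
      fix z assume "b<z \<and> z<y"
      show "(a,z)\<notin>T"
      proof
        assume "(a,z) \<in> T"
        then have "z \<in> ?A" using \<open>b<z \<and> z<y\<close> e by auto
        then have "z \<le> Max ?A" using fin by auto
        then show False using e \<open>b<z \<and> z<y\<close> by auto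
      qed
    qed
    then show ?thesis using xy m e by auto
  qed
next
  assume h: "(x,y) \<in> T \<and>
     ((y = b \<and> a < x \<and> (\<forall>z. a<z \<and> z<x \<longrightarrow> (z,b)\<notin>T)) \<or>
      (x = a \<and> b < y \<and> (\<forall>z. b<z \<and> z<y \<longrightarrow> (a,z)\<notin>T)))"
  have ab: "1 \<le> a" "1 \<le> b" using Q_sub[OF Q p] by auto
  from h have xyT: "(x,y) \<in> T" by auto
  from h consider (col) "y = b" "a < x" "\<forall>z. a<z \<and> z<x \<longrightarrow> (z,b)\<notin>T"
    | (row) "x = a" "b < y" "\<forall>z. b<z \<and> z<y \<longrightarrow> (a,z)\<notin>T" by blast
  then show "(x,y) \<in> cnm_children T (a,b)"
  proof cases
    case col
    have ne1: "(x,y) \<noteq> (1,1)" using col ab by auto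
    have ex: "\<exists>i'<x. (i', y) \<in> T" using col p by auto
    let ?A = "{i'. i' < x \<and> (i', y) \<in> T}"
    have fin: "finite ?A" by (rule finite_subset[of _ "{..<x}"]) auto
    have "Max ?A = a"
    proof (rule Max_eqI_nat[OF _ _ fin])
      show "a \<in> ?A" using col p by auto
      fix z assume "z \<in> ?A" then show "z \<le> a" using col by (cases "a < z") auto
    qed
    then have "cnm_parent T (x,y) = (a,b)" using parent_col[OF ex] col by auto
    then show ?thesis using ne1 xyT unfolding cnm_children_def by auto
  next
    case row
    have ne1: "(x,y) \<noteq> (1,1)" using row ab by auto
    have ex: "\<exists>j'<y. (x, j') \<in> T" using row p by auto
    have nex: "\<not> (\<exists>i'<x. (i', y) \<in> T)" using Q_xor[OF Q xyT ne1] ex by auto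
    let ?A = "{j'. j' < y \<and> (x, j') \<in> T}"
    have fin: "finite ?A" by (rule finite_subset[of _ "{..<y}"]) auto
    have "Max ?A = b"
    proof (rule Max_eqI_nat[OF _ _ fin])
      show "b \<in> ?A" using row p by auto
      fix z assume "z \<in> ?A" then show "z \<le> b" using row by (cases "b < z") auto
    qed
    then have "cnm_parent T (x,y) = (a,b)" using parent_row[OF nex] row by auto
    then show ?thesis using ne1 xyT unfolding cnm_children_def by auto
  qed
qed

lemma children_leaf:
  assumes Q: "Q n T" and p: "(a,b) \<in> T" and s: "a + b = Suc n"
  shows "cnm_children T (a,b) = {}"
proof -
  { fix x y assume "(x,y) \<in> cnm_children T (a,b)"
    then have "(x,y) \<in> T" "a + b < x + y" using child_iff[OF Q p] by auto
    then have False using Q_sub[OF Q] s by fastforce }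
  then show ?thesis by auto
qed

lemma children_inner:
  assumes Q: "Q n T" and p: "(a,b) \<in> T" and s: "a + b \<le> n"
  shows "card (cnm_children T (a,b)) = 2"
proof -
  have ab: "1 \<le> a" "1 \<le> b" using Q_sub[OF Q p] by auto
  have ad: "\<And>i. 1 \<le> i \<Longrightarrow> i \<le> n \<Longrightarrow> (i, Suc n - i) \<in> T" using Q unfolding Q_def by blast
  have e1: "a < Suc n - b \<and> (Suc n - b, b) \<in> T"
    using ad[of "Suc n - b"] s ab by auto
  have e2: "b < Suc n - a \<and> (a, Suc n - a) \<in> T"
    using ad[of a] s ab by auto
  define x0 where "x0 = (LEAST x. a < x \<and> (x,b) \<in> T)"
  define y0 where "y0 = (LEAST y. b < y \<and> (a,y) \<in> T)"
  have x0: "a < x0 \<and> (x0,b) \<in> T" unfolding x0_def by (rule LeastI[of _ "Suc n - b"]) (use e1 in auto)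
  have y0: "b < y0 \<and> (a,y0) \<in> T" unfolding y0_def by (rule LeastI[of _ "Suc n - a"]) (use e2 in auto)
  have x0m: "\<And>x. a < x \<and> (x,b) \<in> T \<Longrightarrow> x0 \<le> x" unfolding x0_def by (rule Least_le)
  have y0m: "\<And>y. b < y \<and> (a,y) \<in> T \<Longrightarrow> y0 \<le> y" unfolding y0_def by (rule Least_le)
  have "cnm_children T (a,b) = {(x0,b), (a,y0)}"
  proof (intro set_eqI iffI)
    fix q assume "q \<in> cnm_children T (a,b)"
    moreover obtain x y where q: "q = (x,y)" by force
    ultimately have h: "(x,y) \<in> T \<and>
     ((y = b \<and> a < x \<and> (\<forall>z. a<z \<and> z<x \<longrightarrow> (z,b)\<notin>T)) \<or>
      (x = a \<and> b < y \<and> (\<forall>z. b<z \<and> z<y \<longrightarrow> (a,z)\<notin>T)))" using child_iff[OF Q p] by auto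
    then consider "y = b" "a < x" "\<forall>z. a<z \<and> z<x \<longrightarrow> (z,b)\<notin>T" | "x = a" "b < y" "\<forall>z. b<z \<and> z<y \<longrightarrow> (a,z)\<notin>T" by blast
    then show "q \<in> {(x0,b), (a,y0)}"
    proof cases
      case 1
      have "x0 \<le> x" using x0m 1 h by auto
      moreover have "\<not> x0 < x" using 1 x0 by blast
      ultimately show ?thesis using q 1 by auto
    next
      case 2
      have "y0 \<le> y" using y0m 2 h by auto
      moreover have "\<not> y0 < y" using 2 y0 by blast
      ultimately show ?thesis using q 2 by auto
    qed
  next
    fix q assume "q \<in> {(x0,b), (a,y0)}"
    then consider "q = (x0,b)" | "q = (a,y0)" by auto
    then show "q \<in> cnm_children T (a,b)"
    proof cases
      case 1
      have "\<forall>z. a<z \<and> z<x0 \<longrightarrow> (z,b)\<notin>T" using x0m by fastforce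
      then show ?thesis using 1 child_iff[OF Q p] x0 by auto
    next
      case 2
      have "\<forall>z. b<z \<and> z<y0 \<longrightarrow> (a,z)\<notin>T" using y0m by fastforce
      then show ?thesis using 2 child_iff[OF Q p] y0 by auto
    qed
  qed
  moreover have "(x0,b) \<noteq> (a,y0)" using x0 by auto
  ultimately show ?thesis by auto
qed

theorem UD_iff: "is_upper_diagonal_CNM n T \<longleftrightarrow> Q n T"
proof
  assume Q: "Q n T"
  have sub: "T \<subseteq> {1..n} \<times> {1..n}" using Q_sub[OF Q] by fastforce
  have ad: "\<And>i. 1 \<le> i \<Longrightarrow> i \<le> n \<Longrightarrow> (i, Suc n - i) \<in> T" using Q unfolding Q_def by blast
  have rows: "\<forall>i \<in> {1..n}. \<exists>j. (i, j) \<in> T" using ad by (meson atLeastAtMost_iff)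
  have cols: "\<forall>j \<in> {1..n}. \<exists>i. (i, j) \<in> T"
  proof
    fix j assume "j \<in> {1..n}"
    then have "(Suc n - j, Suc n - (Suc n - j)) \<in> T" using ad[of "Suc n - j"] by auto
    moreover have "Suc n - (Suc n - j) = j" using \<open>j \<in> {1..n}\<close> by auto
    ultimately show "\<exists>i. (i, j) \<in> T" by auto
  qed
  have xor: "\<forall>(i, j) \<in> T. (i, j) \<noteq> (1, 1) \<longrightarrow>
        ((\<exists>i'<i. (i', j) \<in> T) \<noteq> (\<exists>j'<j. (i, j') \<in> T))" using Q_xor[OF Q] by blast
  have cardc: "\<forall>p \<in> T. card (cnm_children T p) = 0 \<or> card (cnm_children T p) = 2"
  proof
    fix p assume p: "p \<in> T"
    obtain a b where ab: "p = (a,b)" by force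
    show "card (cnm_children T p) = 0 \<or> card (cnm_children T p) = 2"
    proof (cases "a + b \<le> n")
      case True then show ?thesis using children_inner[OF Q] p ab by auto
    next
      case False
      then have "a + b = Suc n" using Q_sub[OF Q] p ab by fastforce
      then show ?thesis using children_leaf[OF Q] p ab by auto
    qed
  qed
  have leaves: "cnm_leaves T = {(i, n + 1 - i) | i. 1 \<le> i \<and> i \<le> n}"
  proof (intro set_eqI iffI)
    fix p assume "p \<in> cnm_leaves T"
    then have p: "p \<in> T" "cnm_children T p = {}" unfolding cnm_leaves_def by auto
    obtain a b where ab: "p = (a,b)" by force
    have "\<not> a + b \<le> n" using children_inner[OF Q] p ab by fastforce
    then have "a + b = Suc n" "1 \<le> a" "1 \<le> b" using Q_sub[OF Q] p ab by fastforce+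
    then show "p \<in> {(i, n + 1 - i) | i. 1 \<le> i \<and> i \<le> n}" using ab by auto
  next
    fix p assume "p \<in> {(i, n + 1 - i) | i. 1 \<le> i \<and> i \<le> n}"
    then obtain i where i: "p = (i, Suc n - i)" "1 \<le> i" "i \<le> n" by auto
    then have "p \<in> T" using ad by auto
    moreover have "cnm_children T p = {}" using children_leaf[OF Q] i \<open>p \<in> T\<close> by auto
    ultimately show "p \<in> cnm_leaves T" unfolding cnm_leaves_def by auto
  qed
  have "(1,1) \<in> T" using Q unfolding Q_def by auto
  then show "is_upper_diagonal_CNM n T"
    unfolding is_upper_diagonal_CNM_def is_CNM_def using sub rows cols xor cardc leaves by blast
next
  assume U: "is_upper_diagonal_CNM n T"
  then have C: "is_CNM n T" and L: "cnm_leaves T = {(i, n + 1 - i) | i. 1 \<le> i \<and> i \<le> n}"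
    unfolding is_upper_diagonal_CNM_def by auto
  have sub: "T \<subseteq> {1..n} \<times> {1..n}" and o: "(1,1) \<in> T"
    and xor: "\<And>i j. (i, j) \<in> T \<Longrightarrow> (i, j) \<noteq> (1, 1) \<Longrightarrow>
        ((\<exists>i'<i. (i', j) \<in> T) \<noteq> (\<exists>j'<j. (i, j') \<in> T))"
    using C unfolding is_CNM_def by blast+
  have fin: "finite T" using sub finite_subset by blast
  have ad: "\<And>i. 1 \<le> i \<Longrightarrow> i \<le> n \<Longrightarrow> (i, Suc n - i) \<in> T"
  proof -
    fix i assume "1 \<le> i" "i \<le> n"
    then have "(i, Suc n - i) \<in> cnm_leaves T" using L by auto
    then show "(i, Suc n - i) \<in> T" unfolding cnm_leaves_def by auto
  qed
  have stair: "\<forall>(i,j) \<in> T. i + j \<le> Suc n"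
  proof (rule ccontr)
    assume "\<not> (\<forall>(i,j) \<in> T. i + j \<le> Suc n)"
    then obtain i j where ij: "(i,j) \<in> T" "i + j > Suc n" by auto
    let ?S = "(\<lambda>(i,j). i + j) ` T"
    have fS: "finite ?S" using fin by auto
    have "i + j \<in> ?S" using ij by force
    then have M: "Max ?S \<ge> i + j" using fS by auto
    have "Max ?S \<in> ?S" using Max_in[OF fS] \<open>i + j \<in> ?S\<close> by blast
    then obtain a b where ab: "(a,b) \<in> T" "a + b = Max ?S" by auto
    have nochild: "cnm_children T (a,b) = {}"
    proof (rule ccontr)
      assume "cnm_children T (a,b) \<noteq> {}"
      then obtain x y where xy: "(x,y) \<in> cnm_children T (a,b)" by auto
      then have "(x,y) \<in> T" "(x,y) \<noteq> (1,1)" "cnm_parent T (x,y) = (a,b)"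
        unfolding cnm_children_def by auto
      then have "a + b < x + y" using parent_less[of x y T] xor by fastforce
      moreover have "x + y \<le> Max ?S" using fS \<open>(x,y) \<in> T\<close> by (metis (no_types, lifting) Max_ge case_prod_conv image_eqI)
      ultimately show False using ab by auto
    qed
    then have "(a,b) \<in> cnm_leaves T" using ab unfolding cnm_leaves_def by auto
    then have "a + b = Suc n" using L by auto
    then show False using M ab ij by auto
  qed
  show "Q n T" unfolding Q_def
  proof (intro conjI)
    show "T \<subseteq> {(i,j). 1 \<le> i \<and> 1 \<le> j \<and> i + j \<le> Suc n}" using sub stair by auto
  qed (use o ad xor in auto)
qed


definition sh :: "nat \<Rightarrow> nat \<Rightarrow> nat" where "sh a x = (if a \<le> x then Suc x else x)"
definition ush :: "nat \<Rightarrow> nat \<Rightarrow> nat" where "ush a x = (if a < x then x - 1 else x)"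

lemma sh_less_iff[simp]: "sh a x < sh a y \<longleftrightarrow> x < y" unfolding sh_def by auto
lemma sh_eq_iff[simp]: "sh a x = sh a y \<longleftrightarrow> x = y" unfolding sh_def by auto
lemma sh_neq[simp]: "sh a x \<noteq> a" unfolding sh_def by auto
lemma ush_sh[simp]: "ush a (sh a x) = x" unfolding sh_def ush_def by auto
lemma sh_ush[simp]: "x \<noteq> a \<Longrightarrow> sh a (ush a x) = x" unfolding sh_def ush_def by auto
lemma ush_less_iff: "x \<noteq> a \<Longrightarrow> y \<noteq> a \<Longrightarrow> ush a x < ush a y \<longleftrightarrow> x < y" unfolding ush_def by auto
lemma ush_eq_iff: "x \<noteq> a \<Longrightarrow> y \<noteq> a \<Longrightarrow> ush a x = ush a y \<longleftrightarrow> x = y" unfolding ush_def by auto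

definition ins :: "nat \<Rightarrow> nat \<Rightarrow> (nat \<times> nat) set \<Rightarrow> (nat \<times> nat) set" where
  "ins m k T = (\<lambda>(i,j). (sh (k+2) i, sh (Suc m - k) j)) ` T \<union> {(k+2, m-k), (k+1, Suc m - k)}"

definition del :: "nat \<Rightarrow> nat \<Rightarrow> (nat \<times> nat) set \<Rightarrow> (nat \<times> nat) set" where
  "del m k T = (\<lambda>(i,j). (ush (k+2) i, ush (Suc m - k) j)) ` {p\<in>T. fst p \<noteq> k+2 \<and> snd p \<noteq> Suc m - k}"

lemma mem_ins: "(x,y) \<in> ins m k T \<longleftrightarrow> (x,y) = (k+2, m-k) \<or> (x,y) = (k+1, Suc m - k) \<or>
   (\<exists>i j. (i,j) \<in> T \<and> x = sh (k+2) i \<and> y = sh (Suc m - k) j)"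
  unfolding ins_def by auto

lemma mem_del: "(x,y) \<in> del m k T \<longleftrightarrow>
   (\<exists>i j. (i,j) \<in> T \<and> i \<noteq> k+2 \<and> j \<noteq> Suc m - k \<and> x = ush (k+2) i \<and> y = ush (Suc m - k) j)"
  unfolding del_def by force

lemma del_ins: "del m k (ins m k T) = T"
proof (intro set_eqI iffI)
  fix p assume "p \<in> del m k (ins m k T)"
  then obtain x y where "p = (x,y)" "(\<exists>i j. (i,j) \<in> ins m k T \<and> i \<noteq> k+2 \<and> j \<noteq> Suc m - k \<and> x = ush (k+2) i \<and> y = ush (Suc m - k) j)"
    using mem_del by (metis surj_pair)
  then show "p \<in> T" unfolding mem_ins by auto
next
  fix p assume "p \<in> T"
  obtain x y where p: "p = (x,y)" by force
  have "(sh (k+2) x, sh (Suc m - k) y) \<in> ins m k T" using \<open>p \<in> T\<close> p mem_ins by blast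
  then show "p \<in> del m k (ins m k T)" unfolding p mem_del
    by (intro exI[of _ "sh (k+2) x"] exI[of _ "sh (Suc m - k) y"]) auto
qed

lemma Q_leaf: "Q n T \<Longrightarrow> 1 \<le> i \<Longrightarrow> i \<le> n \<Longrightarrow> (i, Suc n - i) \<in> T"
  unfolding Q_def by blast

lemma Q_one: "Q n T \<Longrightarrow> (1,1) \<in> T"
  unfolding Q_def by blast

lemma QI:
  assumes "\<And>i j. (i,j) \<in> T \<Longrightarrow> 1 \<le> i \<and> 1 \<le> j \<and> i + j \<le> Suc n"
    "(1,1) \<in> T" "\<And>i. 1 \<le> i \<Longrightarrow> i \<le> n \<Longrightarrow> (i, Suc n - i) \<in> T"
    "\<And>i j. (i,j) \<in> T \<Longrightarrow> (i,j) \<noteq> (1,1) \<Longrightarrow> (\<exists>i'<i. (i',j) \<in> T) \<noteq> (\<exists>j'<j. (i,j') \<in> T)"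
  shows "Q n T"
  unfolding Q_def using assms by blast

lemma mem_insI: "(i,j) \<in> T \<Longrightarrow> x = sh (k+2) i \<Longrightarrow> y = sh (Suc m - k) j \<Longrightarrow> (x,y) \<in> ins m k T"
  unfolding ins_def by auto

lemma ins_above:
  assumes Q: "Q m T" and k: "k < m" and ij: "(i,j) \<in> T"
  shows "(\<exists>x<sh (k+2) i. (x, sh (Suc m - k) j) \<in> ins m k T) \<longleftrightarrow> (\<exists>x<i. (x,j)\<in>T)"
proof
  assume "\<exists>x<sh (k+2) i. (x, sh (Suc m - k) j) \<in> ins m k T"
  then obtain x where x: "x < sh (k+2) i" "(x, sh (Suc m - k) j) \<in> ins m k T" by blast
  have st: "i + j \<le> Suc m" using Q_sub[OF Q ij] by auto
  from x(2)[unfolded mem_ins] consider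
      "(x, sh (Suc m - k) j) = (k+2, m-k)" | "(x, sh (Suc m - k) j) = (k+1, Suc m - k)"
    | "\<exists>i' j'. (i',j') \<in> T \<and> x = sh (k+2) i' \<and> sh (Suc m - k) j = sh (Suc m - k) j'" by blast
  then show "\<exists>x<i. (x,j)\<in>T"
  proof cases
    case 1
    then have "j = m - k" "k + 2 \<le> i" using x(1) k by (auto simp: sh_def split: if_splits)
    then show ?thesis using st k by auto
  next
    case 2 then show ?thesis by auto
  next
    case 3
    then obtain i' where "(i',j) \<in> T" "x = sh (k+2) i'" by auto
    then show ?thesis using x(1) by auto
  qed
next
  assume "\<exists>x<i. (x,j)\<in>T"
  then obtain x where "x < i" "(x,j) \<in> T" by blast
  then show "\<exists>x<sh (k+2) i. (x, sh (Suc m - k) j) \<in> ins m k T"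
    by (intro exI[of _ "sh (k+2) x"]) (auto simp: mem_ins)
qed

lemma ins_left:
  assumes Q: "Q m T" and k: "k < m" and ij: "(i,j) \<in> T"
  shows "(\<exists>y<sh (Suc m - k) j. (sh (k+2) i, y) \<in> ins m k T) \<longleftrightarrow> (\<exists>y<j. (i,y)\<in>T)"
proof
  assume "\<exists>y<sh (Suc m - k) j. (sh (k+2) i, y) \<in> ins m k T"
  then obtain y where y: "y < sh (Suc m - k) j" "(sh (k+2) i, y) \<in> ins m k T" by blast
  have st: "i + j \<le> Suc m" using Q_sub[OF Q ij] by auto
  from y(2)[unfolded mem_ins] consider
      "(sh (k+2) i, y) = (k+2, m-k)" | "(sh (k+2) i, y) = (k+1, Suc m - k)"
    | "\<exists>i' j'. (i',j') \<in> T \<and> sh (k+2) i = sh (k+2) i' \<and> y = sh (Suc m - k) j'" by blast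
  then show "\<exists>y<j. (i,y)\<in>T"
  proof cases
    case 1 then show ?thesis by auto
  next
    case 2
    then have "i = k + 1" "Suc m - k \<le> j" using y(1) k by (auto simp: sh_def split: if_splits)
    then show ?thesis using st k by auto
  next
    case 3
    then obtain j' where "(i,j') \<in> T" "y = sh (Suc m - k) j'" by auto
    then show ?thesis using y(1) by auto
  qed
next
  assume "\<exists>y<j. (i,y)\<in>T"
  then obtain y where "y < j" "(i,y) \<in> T" by blast
  then show "\<exists>y<sh (Suc m - k) j. (sh (k+2) i, y) \<in> ins m k T"
    by (intro exI[of _ "sh (Suc m - k) y"]) (auto simp: mem_ins)
qed

lemma ins_Q:
  assumes Q: "Q m T" and k: "k < m"
  shows "Q (Suc m) (ins m k T)"
proof (rule QI)
  have lk: "(k+1, m-k) \<in> T" using Q_leaf[OF Q, of "k+1"] k by auto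
  fix x y assume xy: "(x,y) \<in> ins m k T"
  from xy[unfolded mem_ins] consider "(x,y) = (k+2, m-k)" | "(x,y) = (k+1, Suc m - k)"
    | "\<exists>i j. (i,j) \<in> T \<and> x = sh (k+2) i \<and> y = sh (Suc m - k) j" by blast
  then show "1 \<le> x \<and> 1 \<le> y \<and> x + y \<le> Suc (Suc m)"
  proof cases
    case 3
    then obtain i j where ij: "(i,j) \<in> T" "x = sh (k+2) i" "y = sh (Suc m - k) j" by blast
    then show ?thesis using Q_sub[OF Q ij(1)] k by (auto simp: sh_def)
  qed (use k in auto)
  assume ne: "(x,y) \<noteq> (1,1)"
  from xy[unfolded mem_ins] consider "(x,y) = (k+2, m-k)" | "(x,y) = (k+1, Suc m - k)"
    | "\<exists>i j. (i,j) \<in> T \<and> x = sh (k+2) i \<and> y = sh (Suc m - k) j" by blast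
  then show "(\<exists>i'<x. (i',y) \<in> ins m k T) \<noteq> (\<exists>j'<y. (x,j') \<in> ins m k T)"
  proof cases
    case 1
    have a: "(k+1, m-k) \<in> ins m k T" by (rule mem_insI[OF lk]) (use k in \<open>auto simp: sh_def\<close>)
    have "\<not> (\<exists>j'<y. (x,j') \<in> ins m k T)"
    proof
      assume "\<exists>j'<y. (x,j') \<in> ins m k T"
      then obtain j' where "j' < y" "(x,j') \<in> ins m k T" by blast
      then show False using 1 unfolding mem_ins by (auto simp: sh_def split: if_splits)
    qed
    then show ?thesis using a 1 by auto
  next
    case 2
    have a: "(k+1, m-k) \<in> ins m k T" by (rule mem_insI[OF lk]) (use k in \<open>auto simp: sh_def\<close>)
    have "\<not> (\<exists>i'<x. (i',y) \<in> ins m k T)"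
    proof
      assume "\<exists>i'<x. (i',y) \<in> ins m k T"
      then obtain i' where "i' < x" "(i',y) \<in> ins m k T" by blast
      then show False using 2 k unfolding mem_ins by (auto simp: sh_def split: if_splits)
    qed
    then show ?thesis using a 2 k by auto
  next
    case 3
    then obtain i j where ij: "(i,j) \<in> T" "x = sh (k+2) i" "y = sh (Suc m - k) j" by blast
    have "(i,j) \<noteq> (1,1)" using ne ij k by (auto simp: sh_def split: if_splits)
    then show ?thesis using Q_xor[OF Q ij(1)] ins_above[OF Q k ij(1)] ins_left[OF Q k ij(1)] ij by simp
  qed
next
  show "(1,1) \<in> ins m k T" using Q_one[OF Q] k unfolding mem_ins
    by (intro disjI2 exI[of _ 1] exI[of _ 1]) (auto simp: sh_def)
next
  fix i assume i: "1 \<le> i" "i \<le> Suc m"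
  consider "i \<le> k" | "i = k+1" | "i = k+2" | "k + 3 \<le> i" by linarith
  then show "(i, Suc (Suc m) - i) \<in> ins m k T"
  proof cases
    case 1
    have "(i, Suc m - i) \<in> T" using Q_leaf[OF Q] i 1 k by auto
    then show ?thesis unfolding mem_ins using 1 k
      by (intro disjI2 exI[of _ i] exI[of _ "Suc m - i"]) (auto simp: sh_def)
  next
    case 4
    have "(i - 1, Suc m - (i - 1)) \<in> T" using Q_leaf[OF Q, of "i-1"] i 4 k by auto
    then show ?thesis unfolding mem_ins using 4 k i
      by (intro disjI2 exI[of _ "i - 1"] exI[of _ "Suc m - (i - 1)"]) (auto simp: sh_def)
  qed (use k in \<open>auto simp: mem_ins\<close>)
qed

lemma ins_P:
  assumes Q: "Q m T" and k: "k < m" and none: "\<forall>i\<in>{1..k-1}. (i, m-i) \<notin> T"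
  shows "(\<forall>i\<in>{1..k}. (i, Suc m - i) \<notin> ins m k T) \<and> (k+1, Suc m - k - 1) \<in> ins m k T"
proof
  show "\<forall>i\<in>{1..k}. (i, Suc m - i) \<notin> ins m k T"
  proof
    fix i assume i: "i \<in> {1..k}"
    show "(i, Suc m - i) \<notin> ins m k T"
    proof
      assume "(i, Suc m - i) \<in> ins m k T"
      then obtain i' j' where h: "(i',j') \<in> T" "i = sh (k+2) i'" "Suc m - i = sh (Suc m - k) j'"
        using i unfolding mem_ins by auto
      have "i' = i" using h(2) i by (auto simp: sh_def split: if_splits)
      moreover have "i < k" "j' = m - i" using h(3) i k by (auto simp: sh_def split: if_splits)
      ultimately show False using none h(1) i by auto
    qed
  qed
  have lk: "(k+1, m-k) \<in> T" using Q_leaf[OF Q, of "k+1"] k by auto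
  show "(k+1, Suc m - k - 1) \<in> ins m k T" by (rule mem_insI[OF lk]) (use k in \<open>auto simp: sh_def\<close>)
qed

lemma del_rowr:
  assumes Q: "Q (Suc m) T" and k: "k < m" and P: "(k+1, m-k) \<in> T" and y: "(k+2, y) \<in> T"
  shows "y = m - k"
proof (rule ccontr)
  assume ne: "y \<noteq> m - k"
  have "y \<le> m - k" using Q_sub[OF Q y] by auto
  then have "y < m - k" using ne by auto
  have leaf: "(k+2, m-k) \<in> T" using Q_leaf[OF Q, of "k+2"] k by auto
  have "(k+2, m-k) \<noteq> (1,1)" by auto
  then have "(\<exists>i'<k+2. (i',m-k) \<in> T) \<noteq> (\<exists>j'<m-k. (k+2,j') \<in> T)" using Q_xor[OF Q leaf] by blast
  moreover have "\<exists>i'<k+2. (i',m-k) \<in> T" using P by auto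
  moreover have "\<exists>j'<m-k. (k+2,j') \<in> T" using y \<open>y < m - k\<close> by auto
  ultimately show False by blast
qed

lemma del_colc:
  assumes Q: "Q (Suc m) T" and k: "k < m" and P: "(k+1, m-k) \<in> T" and x: "(x, Suc m - k) \<in> T"
  shows "x = k + 1"
proof (rule ccontr)
  assume ne: "x \<noteq> k + 1"
  have "x \<le> k + 1" using Q_sub[OF Q x] k by auto
  then have "x < k + 1" using ne by auto
  have leaf: "(k+1, Suc m - k) \<in> T" using Q_leaf[OF Q, of "k+1"] k by auto
  have "(k+1, Suc m - k) \<noteq> (1,1)" using k by auto
  then have "(\<exists>i'<k+1. (i',Suc m - k) \<in> T) \<noteq> (\<exists>j'<Suc m - k. (k+1,j') \<in> T)" using Q_xor[OF Q leaf] by blast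
  moreover have "\<exists>j'<Suc m - k. (k+1,j') \<in> T" using P k by (intro exI[of _ "m-k"]) auto
  moreover have "\<exists>i'<k+1. (i',Suc m - k) \<in> T" using x \<open>x < k + 1\<close> by auto
  ultimately show False by blast
qed

lemma mem_delI: "(i,j) \<in> T \<Longrightarrow> i \<noteq> k+2 \<Longrightarrow> j \<noteq> Suc m - k \<Longrightarrow> x = ush (k+2) i \<Longrightarrow> y = ush (Suc m - k) j \<Longrightarrow> (x,y) \<in> del m k T"
  unfolding mem_del by blast

lemma del_above:
  assumes Q: "Q (Suc m) T" and k: "k < m" and P: "(k+1, m-k) \<in> T"
    and ij: "(i,j) \<in> T" "i \<noteq> k+2" "j \<noteq> Suc m - k"
  shows "(\<exists>x<ush (k+2) i. (x, ush (Suc m - k) j) \<in> del m k T) \<longleftrightarrow> (\<exists>x<i. (x,j)\<in>T)"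
proof
  assume "\<exists>x<ush (k+2) i. (x, ush (Suc m - k) j) \<in> del m k T"
  then obtain x where x: "x < ush (k+2) i" "(x, ush (Suc m - k) j) \<in> del m k T" by blast
  then obtain i' j' where h: "(i',j') \<in> T" "i' \<noteq> k+2" "j' \<noteq> Suc m - k" "x = ush (k+2) i'"
     "ush (Suc m - k) j = ush (Suc m - k) j'" unfolding mem_del by metis
  have "j' = j" using h(3,5) ij(3) ush_eq_iff by metis
  moreover have "i' < i" using h(2,4) x(1) ij(2) ush_less_iff by metis
  ultimately show "\<exists>x<i. (x,j)\<in>T" using h(1) by auto
next
  assume "\<exists>x<i. (x,j)\<in>T"
  then obtain x where x: "x < i" "(x,j) \<in> T" by blast
  have "x \<noteq> k + 2"
  proof
    assume "x = k+2"
    then have "j = m - k" using del_rowr[OF Q k P] x by auto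
    then show False using Q_sub[OF Q ij(1)] x \<open>x = k+2\<close> k by auto
  qed
  then have "(ush (k+2) x, ush (Suc m - k) j) \<in> del m k T" using mem_delI[OF x(2)] ij by blast
  moreover have "ush (k+2) x < ush (k+2) i" using ush_less_iff \<open>x \<noteq> k+2\<close> ij(2) x(1) by metis
  ultimately show "\<exists>x<ush (k+2) i. (x, ush (Suc m - k) j) \<in> del m k T" by blast
qed

lemma del_left:
  assumes Q: "Q (Suc m) T" and k: "k < m" and P: "(k+1, m-k) \<in> T"
    and ij: "(i,j) \<in> T" "i \<noteq> k+2" "j \<noteq> Suc m - k"
  shows "(\<exists>y<ush (Suc m - k) j. (ush (k+2) i, y) \<in> del m k T) \<longleftrightarrow> (\<exists>y<j. (i,y)\<in>T)"
proof
  assume "\<exists>y<ush (Suc m - k) j. (ush (k+2) i, y) \<in> del m k T"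
  then obtain y where y: "y < ush (Suc m - k) j" "(ush (k+2) i, y) \<in> del m k T" by blast
  then obtain i' j' where h: "(i',j') \<in> T" "i' \<noteq> k+2" "j' \<noteq> Suc m - k" "ush (k+2) i = ush (k+2) i'"
     "y = ush (Suc m - k) j'" unfolding mem_del by metis
  have "i' = i" using h(2,4) ij(2) ush_eq_iff by metis
  moreover have "j' < j" using h(3,5) y(1) ij(3) ush_less_iff by metis
  ultimately show "\<exists>y<j. (i,y)\<in>T" using h(1) by auto
next
  assume "\<exists>y<j. (i,y)\<in>T"
  then obtain y where y: "y < j" "(i,y) \<in> T" by blast
  have "y \<noteq> Suc m - k"
  proof
    assume "y = Suc m - k"
    then have "i = k + 1" using del_colc[OF Q k P] y by auto
    then show False using Q_sub[OF Q ij(1)] y \<open>y = Suc m - k\<close> k by auto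
  qed
  then have "(ush (k+2) i, ush (Suc m - k) y) \<in> del m k T" using mem_delI[OF y(2)] ij by blast
  moreover have "ush (Suc m - k) y < ush (Suc m - k) j" using ush_less_iff \<open>y \<noteq> Suc m - k\<close> ij(3) y(1) by metis
  ultimately show "\<exists>y<ush (Suc m - k) j. (ush (k+2) i, y) \<in> del m k T" by blast
qed

lemma del_Q:
  assumes Q: "Q (Suc m) T" and k: "k < m" and P: "(k+1, m-k) \<in> T"
  shows "Q m (del m k T)"
proof (rule QI)
  fix x y assume "(x,y) \<in> del m k T"
  then obtain i j where h: "(i,j) \<in> T" "i \<noteq> k+2" "j \<noteq> Suc m - k" "x = ush (k+2) i"
     "y = ush (Suc m - k) j" unfolding mem_del by metis
  have b: "1 \<le> i" "1 \<le> j" "i + j \<le> Suc (Suc m)" using Q_sub[OF Q h(1)] by auto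
  show "1 \<le> x \<and> 1 \<le> y \<and> x + y \<le> Suc m"
    using b h k by (auto simp: ush_def)
  assume ne: "(x,y) \<noteq> (1,1)"
  have ne': "(i,j) \<noteq> (1,1)" using ne h k by (auto simp: ush_def)
  show "(\<exists>i'<x. (i',y) \<in> del m k T) \<noteq> (\<exists>j'<y. (x,j') \<in> del m k T)"
    using Q_xor[OF Q h(1) ne'] del_above[OF Q k P h(1-3)] del_left[OF Q k P h(1-3)] h(4,5) by simp
next
  show "(1,1) \<in> del m k T" using Q_one[OF Q] k by (intro mem_delI[of 1 1]) (auto simp: ush_def)
next
  fix i assume i: "1 \<le> i" "i \<le> m"
  consider "i \<le> k" | "i = k+1" | "k + 2 \<le> i" by linarith
  then show "(i, Suc m - i) \<in> del m k T"
  proof cases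
    case 1
    have "(i, Suc (Suc m) - i) \<in> T" using Q_leaf[OF Q] i 1 k by auto
    then show ?thesis using 1 k i by (intro mem_delI[of i "Suc (Suc m) - i"]) (auto simp: ush_def)
  next
    case 2
    then show ?thesis using P k by (intro mem_delI[of "k+1" "m-k"]) (auto simp: ush_def)
  next
    case 3
    have "(i+1, Suc (Suc m) - (i+1)) \<in> T" using Q_leaf[OF Q, of "i+1"] i 3 k by auto
    then show ?thesis using 3 k i by (intro mem_delI[of "i+1" "Suc (Suc m) - (i+1)"]) (auto simp: ush_def)
  qed
qed

lemma del_P:
  assumes Q: "Q (Suc m) T" and k: "k < m" and none: "\<forall>i\<in>{1..k}. (i, Suc m - i) \<notin> T"
  shows "\<forall>i\<in>{1..k-1}. (i, m-i) \<notin> del m k T"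
proof
  fix i assume i: "i \<in> {1..k-1}"
  show "(i, m-i) \<notin> del m k T"
  proof
    assume "(i, m-i) \<in> del m k T"
    then obtain i' j' where h: "(i',j') \<in> T" "i' \<noteq> k+2" "j' \<noteq> Suc m - k" "i = ush (k+2) i'"
     "m - i = ush (Suc m - k) j'" unfolding mem_del by metis
    have "i' = i" using h(2,4) i by (auto simp: ush_def split: if_splits)
    moreover have "j' = Suc m - i" using h(3,5) i k by (auto simp: ush_def split: if_splits)
    ultimately show False using h(1) none i by auto
  qed
qed

lemma ins_del:
  assumes Q: "Q (Suc m) T" and k: "k < m" and P: "(k+1, m-k) \<in> T"
  shows "ins m k (del m k T) = T"
proof (intro set_eqI iffI)
  fix p assume "p \<in> ins m k (del m k T)"
  moreover obtain x y where p: "p = (x,y)" by force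
  ultimately consider "(x,y) = (k+2, m-k)" | "(x,y) = (k+1, Suc m - k)"
    | "\<exists>i j. (i,j) \<in> del m k T \<and> x = sh (k+2) i \<and> y = sh (Suc m - k) j" using mem_ins[of x y m k "del m k T"] by blast
  then show "p \<in> T"
  proof cases
    case 1 then show ?thesis using Q_leaf[OF Q, of "k+2"] k p by auto
  next
    case 2 then show ?thesis using Q_leaf[OF Q, of "k+1"] k p by auto
  next
    case 3
    then obtain i j where "(i,j) \<in> del m k T" "x = sh (k+2) i" "y = sh (Suc m - k) j" by blast
    then obtain i' j' where h: "(i',j') \<in> T" "i' \<noteq> k+2" "j' \<noteq> Suc m - k" "i = ush (k+2) i'"
     "j = ush (Suc m - k) j'" "x = sh (k+2) i" "y = sh (Suc m - k) j" unfolding mem_del by metis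
    then show ?thesis using p by simp
  qed
next
  fix p assume pT: "p \<in> T"
  obtain x y where p: "p = (x,y)" by force
  show "p \<in> ins m k (del m k T)"
  proof (cases "x = k+2")
    case True
    then have "y = m - k" using del_rowr[OF Q k P] pT p by auto
    then show ?thesis using True p unfolding ins_def by auto
  next
    case False
    show ?thesis
    proof (cases "y = Suc m - k")
      case True
      then have "x = k + 1" using del_colc[OF Q k P] pT p by auto
      then show ?thesis using True p unfolding ins_def by auto
    next
      case False2: False
      have "(ush (k+2) x, ush (Suc m - k) y) \<in> del m k T" using mem_delI pT p False False2 by blast
      then show ?thesis using p False False2 by (auto intro: mem_insI)
    qed
  qed
qed

lemma card_cherry:
  assumes k: "k < m"
  shows "card {T. Q (Suc m) T \<and> (\<forall>i\<in>{1..k}. (i, Suc m - i) \<notin> T) \<and> (k+1, Suc m - k - 1) \<in> T}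
       = card {T. Q m T \<and> (\<forall>i\<in>{1..k-1}. (i, m-i) \<notin> T)}"
proof (rule bij_betw_same_card[of "del m k"], rule bij_betw_byWitness[where f' = "ins m k"])
  show "\<forall>a\<in>{T. Q (Suc m) T \<and> (\<forall>i\<in>{1..k}. (i, Suc m - i) \<notin> T) \<and> (k+1, Suc m - k - 1) \<in> T}.
      ins m k (del m k a) = a" using ins_del k by auto
  show "\<forall>a'\<in>{T. Q m T \<and> (\<forall>i\<in>{1..k-1}. (i, m-i) \<notin> T)}. del m k (ins m k a') = a'" using del_ins by auto
  show "del m k ` {T. Q (Suc m) T \<and> (\<forall>i\<in>{1..k}. (i, Suc m - i) \<notin> T) \<and> (k+1, Suc m - k - 1) \<in> T}
      \<subseteq> {T. Q m T \<and> (\<forall>i\<in>{1..k-1}. (i, m-i) \<notin> T)}" using del_Q del_P k by auto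
  show "ins m k ` {T. Q m T \<and> (\<forall>i\<in>{1..k-1}. (i, m-i) \<notin> T)}
      \<subseteq> {T. Q (Suc m) T \<and> (\<forall>i\<in>{1..k}. (i, Suc m - i) \<notin> T) \<and> (k+1, Suc m - k - 1) \<in> T}"
    using ins_Q ins_P k by auto
qed


definition Aok :: "nat \<Rightarrow> nat set \<Rightarrow> (nat \<times> nat) set \<Rightarrow> bool" where
  "Aok p S C \<longleftrightarrow> C \<subseteq> {(i,j). 1 \<le> i \<and> 1 \<le> j \<and> i + j \<le> Suc p} \<and>
     (\<forall>i. 1 \<le> i \<and> i \<le> p \<longrightarrow> (i, Suc p - i) \<in> C) \<and>
     (\<forall>i j. (i,j) \<in> C \<longrightarrow> ((\<exists>j'<j. (i,j') \<in> C) \<noteq> (j \<in> S \<or> (\<exists>i'<i. (i',j) \<in> C))))"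

lemma Aok_sub: "Aok p S C \<Longrightarrow> (i,j) \<in> C \<Longrightarrow> 1 \<le> i \<and> 1 \<le> j \<and> i + j \<le> Suc p"
  unfolding Aok_def by auto
lemma Aok_leaf: "Aok p S C \<Longrightarrow> 1 \<le> i \<Longrightarrow> i \<le> p \<Longrightarrow> (i, Suc p - i) \<in> C"
  unfolding Aok_def by auto
lemma Aok_xor: "Aok p S C \<Longrightarrow> (i,j) \<in> C \<Longrightarrow> (\<exists>j'<j. (i,j') \<in> C) \<noteq> (j \<in> S \<or> (\<exists>i'<i. (i',j) \<in> C))"
  unfolding Aok_def by blast
lemma AokI:
  assumes "\<And>i j. (i,j) \<in> C \<Longrightarrow> 1 \<le> i \<and> 1 \<le> j \<and> i + j \<le> Suc p"
    "\<And>i. 1 \<le> i \<Longrightarrow> i \<le> p \<Longrightarrow> (i, Suc p - i) \<in> C"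
    "\<And>i j. (i,j) \<in> C \<Longrightarrow> (\<exists>j'<j. (i,j') \<in> C) \<noteq> (j \<in> S \<or> (\<exists>i'<i. (i',j) \<in> C))"
  shows "Aok p S C"
  unfolding Aok_def using assms by blast

lemma Q_Aok:
  assumes n: "1 \<le> n"
  shows "Q n T \<longleftrightarrow> Aok n {1} T"
proof
  assume Q: "Q n T"
  show "Aok n {1} T"
  proof (rule AokI)
    fix i j assume ij: "(i,j) \<in> T"
    show "1 \<le> i \<and> 1 \<le> j \<and> i + j \<le> Suc n" using Q_sub[OF Q ij] .
    have b: "1 \<le> i" "1 \<le> j" using Q_sub[OF Q ij] by auto
    show "(\<exists>j'<j. (i,j') \<in> T) \<noteq> (j \<in> {1} \<or> (\<exists>i'<i. (i',j) \<in> T))"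
    proof (cases "j = 1")
      case True
      have nl: "\<not> (\<exists>j'<j. (i,j') \<in> T)" using True Q_sub[OF Q] by fastforce
      show ?thesis using True nl by auto
    next
      case False
      then have "(i,j) \<noteq> (1,1)" by auto
      then show ?thesis using Q_xor[OF Q ij] False by auto
    qed
  next
    fix i assume "1 \<le> i" "i \<le> n" then show "(i, Suc n - i) \<in> T" using Q unfolding Q_def by blast
  qed
next
  assume A: "Aok n {1} T"
  have l1: "(1, n) \<in> T" using Aok_leaf[OF A, of 1] n by auto
  define j0 where "j0 = (LEAST j. (1,j) \<in> T)"
  have j0: "(1,j0) \<in> T" unfolding j0_def by (rule LeastI[of _ n]) (rule l1)
  have j0m: "\<And>j. (1,j) \<in> T \<Longrightarrow> j0 \<le> j" unfolding j0_def by (rule Least_le)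
  have "\<not> (\<exists>j'<j0. (1,j') \<in> T)" using j0m by fastforce
  moreover have "\<not> (\<exists>i'<1. (i',j0) \<in> T)" using Aok_sub[OF A] by fastforce
  ultimately have "j0 = 1" using Aok_xor[OF A j0] by auto
  then have o: "(1,1) \<in> T" using j0 by simp
  show "Q n T" unfolding Q_def
  proof (intro conjI allI impI)
    show "T \<subseteq> {(i,j). 1 \<le> i \<and> 1 \<le> j \<and> i + j \<le> Suc n}" using Aok_sub[OF A] by auto
    show "(1,1) \<in> T" by (rule o)
    fix i assume "1 \<le> i \<and> i \<le> n" then show "(i, Suc n - i) \<in> T" using Aok_leaf[OF A] by auto
  next
    fix i j assume ij: "(i,j) \<in> T" "(i,j) \<noteq> (1,1)"
    show "(\<exists>i'<i. (i',j) \<in> T) \<noteq> (\<exists>j'<j. (i,j') \<in> T)"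
    proof (cases "j = 1")
      case True
      have nl: "\<not> (\<exists>j'<j. (i,j') \<in> T)" using True Aok_sub[OF A] by fastforce
      have "i \<noteq> 1" using ij True by auto
      then have "1 < i" using Aok_sub[OF A ij(1)] by auto
      then have "\<exists>i'<i. (i',j) \<in> T" using o True by auto
      then show ?thesis using nl by auto
    next
      case False
      then show ?thesis using Aok_xor[OF A ij(1)] by auto
    qed
  qed
qed

definition validR :: "nat \<Rightarrow> nat set \<Rightarrow> nat set \<Rightarrow> bool" where
  "validR p S R \<longleftrightarrow> R \<subseteq> {1..p} \<and> p \<in> R \<and> Min R \<in> S \<and> (\<forall>j\<in>R. j \<noteq> Min R \<longrightarrow> j \<notin> S)"

definition row1 :: "(nat \<times> nat) set \<Rightarrow> nat set" where "row1 C = {j. (1,j) \<in> C}"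
definition rest :: "(nat \<times> nat) set \<Rightarrow> (nat \<times> nat) set" where
  "rest C = (\<lambda>(i,j). (i - 1, j)) ` {q \<in> C. 2 \<le> fst q}"
definition glue :: "nat set \<Rightarrow> (nat \<times> nat) set \<Rightarrow> (nat \<times> nat) set" where
  "glue R C = Pair 1 ` R \<union> (\<lambda>(i,j). (Suc i, j)) ` C"

lemma mem_rest: "(x,y) \<in> rest C \<longleftrightarrow> (Suc x, y) \<in> C \<and> 1 \<le> x"
  unfolding rest_def by (auto simp: image_iff)

lemma mem_glue: "(x,y) \<in> glue R C \<longleftrightarrow> (x = 1 \<and> y \<in> R) \<or> (\<exists>i. x = Suc i \<and> (i,y) \<in> C)"
  unfolding glue_def by auto

lemma decomp1:
  assumes A: "Aok p S C" and p: "2 \<le> p"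
  shows "validR p S (row1 C)"
proof -
  let ?R = "row1 C"
  have memR: "\<And>x. x \<in> ?R \<longleftrightarrow> (1,x) \<in> C" unfolding row1_def by simp
  have sub: "?R \<subseteq> {1..p}"
  proof
    fix x assume "x \<in> ?R"
    then have "(1,x) \<in> C" by (simp add: memR)
    from Aok_sub[OF A this] show "x \<in> {1..p}" by simp
  qed
  have pR: "p \<in> ?R" using Aok_leaf[OF A, of 1] p by (simp add: memR)
  have fin: "finite ?R" using sub finite_subset by blast
  have ne: "?R \<noteq> {}" using pR by blast
  have mR: "Min ?R \<in> ?R" using Min_in[OF fin ne] .
  have mC: "(1, Min ?R) \<in> C" using mR by (simp add: memR)
  have mle: "\<And>j. j \<in> ?R \<Longrightarrow> Min ?R \<le> j" using fin by simp
  have noabove: "\<And>j. \<not> (\<exists>i'<1. (i',j) \<in> C)"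
  proof
    fix j assume "\<exists>i'<1. (i',j) \<in> C"
    then have "(0,j) \<in> C" by simp
    from Aok_sub[OF A this] show False by simp
  qed
  have nl: "\<not> (\<exists>j'<Min ?R. (1,j') \<in> C)"
  proof
    assume "\<exists>j'<Min ?R. (1,j') \<in> C"
    then obtain j' where "j' < Min ?R" "(1,j') \<in> C" by blast
    then show False using mle[of j'] by (simp add: memR)
  qed
  have mS: "Min ?R \<in> S" using Aok_xor[OF A mC] nl noabove[of "Min ?R"] by blast
  have oth: "\<forall>j\<in>?R. j \<noteq> Min ?R \<longrightarrow> j \<notin> S"
  proof (intro ballI impI)
    fix j assume j: "j \<in> ?R" "j \<noteq> Min ?R"
    then have "Min ?R < j" using mle[OF j(1)] by simp
    then have "\<exists>j'<j. (1,j') \<in> C" using mC by blast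
    moreover have "(1,j) \<in> C" using j(1) by (simp add: memR)
    ultimately show "j \<notin> S" using Aok_xor[OF A, of 1 j] by blast
  qed
  show ?thesis unfolding validR_def using sub pR mS oth by blast
qed

lemma decomp2:
  assumes A: "Aok p S C" and p: "2 \<le> p"
  shows "Aok (p - 1) (S \<union> row1 C) (rest C)"
proof (rule AokI)
  fix x y assume xy: "(x,y) \<in> rest C"
  then have c: "(Suc x, y) \<in> C" "1 \<le> x" using mem_rest by auto
  show "1 \<le> x \<and> 1 \<le> y \<and> x + y \<le> Suc (p - 1)" using Aok_sub[OF A c(1)] c(2) p by auto
  have L: "(\<exists>j'<y. (x,j') \<in> rest C) \<longleftrightarrow> (\<exists>j'<y. (Suc x,j') \<in> C)" using c(2) by (auto simp: mem_rest)
  have U: "(y \<in> S \<union> row1 C \<or> (\<exists>i'<x. (i',y) \<in> rest C)) \<longleftrightarrow> (y \<in> S \<or> (\<exists>i'<Suc x. (i',y) \<in> C))"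
  proof
    assume "y \<in> S \<union> row1 C \<or> (\<exists>i'<x. (i',y) \<in> rest C)"
    then show "y \<in> S \<or> (\<exists>i'<Suc x. (i',y) \<in> C)" using c(2) by (auto simp: mem_rest row1_def)
  next
    assume "y \<in> S \<or> (\<exists>i'<Suc x. (i',y) \<in> C)"
    then consider "y \<in> S" | i' where "i' < Suc x" "(i',y) \<in> C" by blast
    then show "y \<in> S \<union> row1 C \<or> (\<exists>i'<x. (i',y) \<in> rest C)"
    proof cases
      case 2
      have "1 \<le> i'" using Aok_sub[OF A 2(2)] by auto
      show ?thesis
      proof (cases "i' = 1")
        case True then show ?thesis using 2 by (auto simp: row1_def)
      next
        case False
        then have "(i' - 1, y) \<in> rest C" "i' - 1 < x" using 2 \<open>1 \<le> i'\<close> by (auto simp: mem_rest)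
        then show ?thesis by blast
      qed
    qed auto
  qed
  show "(\<exists>j'<y. (x,j') \<in> rest C) \<noteq> (y \<in> S \<union> row1 C \<or> (\<exists>i'<x. (i',y) \<in> rest C))"
    using L U Aok_xor[OF A c(1)] by simp
next
  fix i assume i: "1 \<le> i" "i \<le> p - 1"
  have "(Suc i, Suc p - Suc i) \<in> C" using Aok_leaf[OF A, of "Suc i"] i by auto
  then show "(i, Suc (p - 1) - i) \<in> rest C" using i p by (auto simp: mem_rest)
qed

lemma glue_ok:
  assumes R: "validR p S R" and A: "Aok (p - 1) (S \<union> R) C" and p: "2 \<le> p"
  shows "Aok p S (glue R C)"
proof (rule AokI)
  have Rs: "R \<subseteq> {1..p}" "p \<in> R" "Min R \<in> S" "\<forall>j\<in>R. j \<noteq> Min R \<longrightarrow> j \<notin> S" using R unfolding validR_def by auto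
  have fin: "finite R" using Rs(1) finite_subset by blast
  have mR: "Min R \<in> R" using Min_in[OF fin] Rs(2) by blast
  have mle: "\<And>j. j \<in> R \<Longrightarrow> Min R \<le> j" using fin by auto
  fix x y assume xy: "(x,y) \<in> glue R C"
  then consider "x = 1" "y \<in> R" | i where "x = Suc i" "(i,y) \<in> C" unfolding mem_glue by blast
  then show "1 \<le> x \<and> 1 \<le> y \<and> x + y \<le> Suc p"
  proof cases
    case 1 then show ?thesis using Rs(1) by auto
  next
    case 2 then show ?thesis using Aok_sub[OF A 2(2)] p by auto
  qed
  from xy consider "x = 1" "y \<in> R" | i where "x = Suc i" "(i,y) \<in> C" "1 \<le> i" unfolding mem_glue
    using Aok_sub[OF A] by fastforce
  then show "(\<exists>j'<y. (x,j') \<in> glue R C) \<noteq> (y \<in> S \<or> (\<exists>i'<x. (i',y) \<in> glue R C))"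
  proof cases
    case 1
    have nab: "\<not> (\<exists>i'<x. (i',y) \<in> glue R C)" using 1 by (auto simp: mem_glue)
    have lft: "(\<exists>j'<y. (x,j') \<in> glue R C) \<longleftrightarrow> (\<exists>j'<y. j' \<in> R)" using 1 Aok_sub[OF A] by (auto simp: mem_glue)
    show ?thesis
    proof (cases "y = Min R")
      case True
      then have "\<not> (\<exists>j'<y. j' \<in> R)" using mle by fastforce
      then show ?thesis using nab lft True Rs(3) by auto
    next
      case False
      then have "Min R < y" using mle 1 by fastforce
      then have "\<exists>j'<y. j' \<in> R" using mR by auto
      moreover have "y \<notin> S" using Rs(4) 1 False by auto
      ultimately show ?thesis using nab lft by auto
    qed
  next
    case 2
    have lft: "(\<exists>j'<y. (x,j') \<in> glue R C) \<longleftrightarrow> (\<exists>j'<y. (i,j') \<in> C)" using 2 by (auto simp: mem_glue)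
    have up: "(y \<in> S \<or> (\<exists>i'<x. (i',y) \<in> glue R C)) \<longleftrightarrow> (y \<in> S \<union> R \<or> (\<exists>i'<i. (i',y) \<in> C))"
    proof
      assume "y \<in> S \<or> (\<exists>i'<x. (i',y) \<in> glue R C)"
      then show "y \<in> S \<union> R \<or> (\<exists>i'<i. (i',y) \<in> C)" using 2 by (auto simp: mem_glue)
    next
      assume "y \<in> S \<union> R \<or> (\<exists>i'<i. (i',y) \<in> C)"
      then consider "y \<in> S" | "y \<in> R" | i' where "i' < i" "(i',y) \<in> C" by blast
      then show "y \<in> S \<or> (\<exists>i'<x. (i',y) \<in> glue R C)"
      proof cases
        case 2
        then have "(1,y) \<in> glue R C" by (auto simp: mem_glue)
        then show ?thesis using \<open>x = Suc i\<close> \<open>1 \<le> i\<close> by (intro disjI2 exI[of _ 1]) auto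
      next
        case 3
        then have "(Suc i',y) \<in> glue R C" by (auto simp: mem_glue)
        then show ?thesis using \<open>x = Suc i\<close> 3 by (intro disjI2 exI[of _ "Suc i'"]) auto
      qed auto
    qed
    show ?thesis using lft up Aok_xor[OF A 2(2)] by simp
  qed
next
  fix i assume i: "1 \<le> i" "i \<le> p"
  show "(i, Suc p - i) \<in> glue R C"
  proof (cases "i = 1")
    case True
    then show ?thesis using R unfolding validR_def by (auto simp: mem_glue)
  next
    case False
    then have "(i - 1, Suc (p - 1) - (i - 1)) \<in> C" using Aok_leaf[OF A, of "i - 1"] i by auto
    moreover have "Suc (p - 1) - (i - 1) = Suc p - i" using i False p by auto
    ultimately show ?thesis using False i unfolding mem_glue by (intro disjI2 exI[of _ "i - 1"]) auto
  qed
qed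

lemma glue_split:
  assumes A: "Aok p S C" shows "glue (row1 C) (rest C) = C"
proof (rule set_eqI)
  fix q :: "nat \<times> nat"
  obtain x y where q: "q = (x,y)" by force
  have "(x,y) \<in> glue (row1 C) (rest C) \<longleftrightarrow> (x,y) \<in> C"
  proof
    assume "(x,y) \<in> glue (row1 C) (rest C)"
    then consider "x = 1" "(1,y) \<in> C" | i where "x = Suc i" "(Suc i, y) \<in> C"
      unfolding mem_glue mem_rest row1_def by blast
    then show "(x,y) \<in> C" by cases auto
  next
    assume h: "(x,y) \<in> C"
    have "1 \<le> x" using Aok_sub[OF A h] by simp
    show "(x,y) \<in> glue (row1 C) (rest C)"
    proof (cases "x = 1")
      case True then show ?thesis using h unfolding mem_glue row1_def by simp
    next
      case False
      then have "x = Suc (x - 1)" "1 \<le> x - 1" using \<open>1 \<le> x\<close> by auto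
      then have "(x - 1, y) \<in> rest C" using h unfolding mem_rest by simp
      then show ?thesis unfolding mem_glue using \<open>x = Suc (x - 1)\<close> by blast
    qed
  qed
  then show "q \<in> glue (row1 C) (rest C) \<longleftrightarrow> q \<in> C" using q by simp
qed

lemma row1_glue:
  assumes A: "Aok q S' C" shows "row1 (glue R C) = R"
proof (rule set_eqI)
  fix y
  have "\<not> (0, y) \<in> C" using Aok_sub[OF A, of 0 y] by auto
  then show "y \<in> row1 (glue R C) \<longleftrightarrow> y \<in> R" unfolding row1_def mem_glue by auto
qed

lemma rest_glue:
  assumes A: "Aok q S' C" shows "rest (glue R C) = C"
proof (rule set_eqI)
  fix p :: "nat \<times> nat"
  obtain x y where p: "p = (x,y)" by force
  have "(x,y) \<in> rest (glue R C) \<longleftrightarrow> (x,y) \<in> C"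
  proof
    assume "(x,y) \<in> rest (glue R C)"
    then have "(Suc x, y) \<in> glue R C" "1 \<le> x" unfolding mem_rest by auto
    then show "(x,y) \<in> C" unfolding mem_glue by auto
  next
    assume h: "(x,y) \<in> C"
    then have "1 \<le> x" using Aok_sub[OF A h] by simp
    then show "(x,y) \<in> rest (glue R C)" using h unfolding mem_rest mem_glue by simp
  qed
  then show "p \<in> rest (glue R C) \<longleftrightarrow> p \<in> C" using p by simp
qed

lemma Aok_finite: "finite {C. Aok p S C}"
proof (rule finite_subset)
  show "{C. Aok p S C} \<subseteq> Pow ({1..p} \<times> {1..p})"
  proof
    fix C assume "C \<in> {C. Aok p S C}"
    then have A: "Aok p S C" by simp
    show "C \<in> Pow ({1..p} \<times> {1..p})"
    proof (rule PowI, rule subsetI)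
      fix q assume "q \<in> C"
      moreover obtain x y where "q = (x,y)" by force
      ultimately show "q \<in> {1..p} \<times> {1..p}" using Aok_sub[OF A, of x y] by auto
    qed
  qed
qed simp

lemma card_Aok_rec:
  assumes p: "2 \<le> p"
  shows "card {C. Aok p S C} = (\<Sum>R\<in>{R. validR p S R}. card {C. Aok (p - 1) (S \<union> R) C})"
proof -
  have finV: "finite {R. validR p S R}"
    by (rule finite_subset[of _ "Pow {1..p}"]) (auto simp: validR_def)
  have "card {C. Aok p S C} = card (Sigma {R. validR p S R} (\<lambda>R. {C. Aok (p - 1) (S \<union> R) C}))"
  proof (rule bij_betw_same_card[of "\<lambda>C. (row1 C, rest C)"],
         rule bij_betw_byWitness[where f' = "\<lambda>(R,C). glue R C"])
    show "\<forall>a\<in>{C. Aok p S C}. (\<lambda>(R,C). glue R C) (row1 a, rest a) = a" using glue_split by auto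
    show "\<forall>a'\<in>Sigma {R. validR p S R} (\<lambda>R. {C. Aok (p - 1) (S \<union> R) C}).
       (row1 ((\<lambda>(R,C). glue R C) a'), rest ((\<lambda>(R,C). glue R C) a')) = a'"
      using row1_glue rest_glue by fastforce
    show "(\<lambda>C. (row1 C, rest C)) ` {C. Aok p S C} \<subseteq> Sigma {R. validR p S R} (\<lambda>R. {C. Aok (p - 1) (S \<union> R) C})"
      using decomp1 decomp2 p by auto
    show "(\<lambda>(R,C). glue R C) ` Sigma {R. validR p S R} (\<lambda>R. {C. Aok (p - 1) (S \<union> R) C}) \<subseteq> {C. Aok p S C}"
      using glue_ok p by auto
  qed
  also have "\<dots> = (\<Sum>R\<in>{R. validR p S R}. card {C. Aok (p - 1) (S \<union> R) C})"
    by (rule card_SigmaI[OF finV]) (simp add: Aok_finite)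
  finally show ?thesis .
qed


lemma H_ident:
  fixes q :: nat and S :: "nat set"
  assumes q: "2 \<le> q" and S: "1 \<in> S"
  shows "(\<Sum>m\<in>{m. m \<in> S \<and> 1 \<le> m \<and> m < q}. \<Prod>a\<in>{m<..<q} - S. real a / (real a - 1)) = real q - 1"
  using q
proof (induction q rule: nat_induct_at_least)
  case base
  have "{m. m \<in> S \<and> 1 \<le> m \<and> m < 2} = {1::nat}" using S by auto
  moreover have "{1::nat<..<2} = {}" by auto
  ultimately show ?case by simp
next
  case (Suc q)
  let ?M = "{m. m \<in> S \<and> 1 \<le> m \<and> m < q}"
  have finM: "finite ?M" by (rule finite_subset[of _ "{..<q}"]) auto
  show ?case
  proof (cases "q \<in> S")
    case True
    have M: "{m. m \<in> S \<and> 1 \<le> m \<and> m < Suc q} = insert q ?M" using True Suc.hyps by auto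
    have e: "\<And>m. m \<in> ?M \<Longrightarrow> {m<..<Suc q} - S = {m<..<q} - S" using True by (auto simp: less_Suc_eq)
    have "(\<Sum>m\<in>{m. m \<in> S \<and> 1 \<le> m \<and> m < Suc q}. \<Prod>a\<in>{m<..<Suc q} - S. real a / (real a - 1))
       = (\<Prod>a\<in>{q<..<Suc q} - S. real a / (real a - 1)) + (\<Sum>m\<in>?M. \<Prod>a\<in>{m<..<Suc q} - S. real a / (real a - 1))"
      unfolding M by (rule sum.insert[OF finM]) auto
    also have "(\<Sum>m\<in>?M. \<Prod>a\<in>{m<..<Suc q} - S. real a / (real a - 1)) = (\<Sum>m\<in>?M. \<Prod>a\<in>{m<..<q} - S. real a / (real a - 1))"
      by (rule sum.cong) (auto simp: e)
    also have "{q<..<Suc q} = ({}::nat set)" by auto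
    finally show ?thesis using Suc.IH by simp
  next
    case False
    have M: "{m. m \<in> S \<and> 1 \<le> m \<and> m < Suc q} = ?M" using False by (auto simp: less_Suc_eq)
    have e: "\<And>m. m \<in> ?M \<Longrightarrow> {m<..<Suc q} - S = insert q ({m<..<q} - S)" using False by auto
    have "(\<Sum>m\<in>{m. m \<in> S \<and> 1 \<le> m \<and> m < Suc q}. \<Prod>a\<in>{m<..<Suc q} - S. real a / (real a - 1))
       = (\<Sum>m\<in>?M. real q / (real q - 1) * (\<Prod>a\<in>{m<..<q} - S. real a / (real a - 1)))"
      unfolding M by (rule sum.cong) (auto simp: e)
    also have "\<dots> = real q / (real q - 1) * (real q - 1)" by (simp only: sum_distrib_left[symmetric] Suc.IH)
    also have "\<dots> = real q" using Suc.hyps by simp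
    finally show ?thesis by simp
  qed
qed

lemma pow_sum:
  fixes D :: "nat set"
  assumes fin: "finite D" and D: "\<forall>a\<in>D. 2 \<le> a"
  shows "(\<Sum>F\<in>Pow D. 1 / (\<Prod>f\<in>F. real f - 1)) = (\<Prod>a\<in>D. real a / (real a - 1))"
proof -
  have "(\<Prod>a\<in>D. real a / (real a - 1)) = (\<Prod>a\<in>D. 1 / (real a - 1) + 1)"
  proof (rule prod.cong)
    fix a assume "a \<in> D"
    then have "2 \<le> a" using D by auto
    then have "real a \<ge> 2" by linarith
    then have "real a - 1 \<noteq> 0" by linarith
    then show "real a / (real a - 1) = 1 / (real a - 1) + 1" by (simp add: field_simps)
  qed simp
  also have "\<dots> = (\<Sum>X\<in>Pow D. (\<Prod>x\<in>X. 1 / (real x - 1)) * (\<Prod>x\<in>D-X. 1))"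
    by (rule prod_add[OF fin])
  also have "\<dots> = (\<Sum>F\<in>Pow D. 1 / (\<Prod>f\<in>F. real f - 1))"
    by (rule sum.cong) (simp_all add: prod_dividef)
  finally show ?thesis by simp
qed

lemma valid_image:
  fixes q :: nat and S :: "nat set"
  assumes q: "q \<notin> S"
  shows "{R. validR q S R} = (\<lambda>(m,F). insert m (insert q F)) ` (SIGMA m:{m. m \<in> S \<and> 1 \<le> m \<and> m < q}. Pow ({m<..<q} - S))"
proof (intro set_eqI iffI)
  fix R assume "R \<in> {R. validR q S R}"
  then have R: "R \<subseteq> {1..q}" "q \<in> R" "Min R \<in> S" "\<forall>j\<in>R. j \<noteq> Min R \<longrightarrow> j \<notin> S" unfolding validR_def by auto
  have fin: "finite R" using R(1) finite_subset by blast
  have mR: "Min R \<in> R" using Min_in[OF fin] R(2) by blast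
  have mle: "\<And>j. j \<in> R \<Longrightarrow> Min R \<le> j" using fin by simp
  have mq: "Min R < q" using mle[OF R(2)] R(3) q by (cases "Min R = q") auto
  have m1: "1 \<le> Min R" using R(1) mR by auto
  let ?F = "R - {Min R, q}"
  have F: "?F \<subseteq> {Min R<..<q} - S"
  proof
    fix f assume f: "f \<in> ?F"
    then have "Min R \<le> f" "f \<le> q" "f \<notin> S" using mle R(1) R(4) by auto
    then show "f \<in> {Min R<..<q} - S" using f by auto
  qed
  have "R = insert (Min R) (insert q ?F)" using mR R(2) by auto
  then show "R \<in> (\<lambda>(m,F). insert m (insert q F)) ` (SIGMA m:{m. m \<in> S \<and> 1 \<le> m \<and> m < q}. Pow ({m<..<q} - S))"
    using F mq m1 R(3) by (intro image_eqI[of _ _ "(Min R, ?F)"]) auto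
next
  fix R assume "R \<in> (\<lambda>(m,F). insert m (insert q F)) ` (SIGMA m:{m. m \<in> S \<and> 1 \<le> m \<and> m < q}. Pow ({m<..<q} - S))"
  then obtain m F where mF: "R = insert m (insert q F)" "m \<in> S" "1 \<le> m" "m < q" "F \<subseteq> {m<..<q} - S" by auto
  have finF: "finite F" using mF(5) finite_subset by (metis finite_Diff finite_greaterThanLessThan)
  have Min: "Min R = m"
  proof (rule Min_eqI)
    show "finite R" using mF(1) finF by simp
    show "m \<in> R" using mF(1) by simp
    fix y assume "y \<in> R" then show "m \<le> y" using mF by auto
  qed
  show "R \<in> {R. validR q S R}" unfolding validR_def using mF Min q by auto
qed

lemma valid_inj:
  fixes q :: nat and S :: "nat set"
  assumes q: "q \<notin> S"
  shows "inj_on (\<lambda>(m,F). insert m (insert q F)) (SIGMA m:{m. m \<in> S \<and> 1 \<le> m \<and> m < q}. Pow ({m<..<q} - S))"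
proof (rule inj_onI)
  fix a b assume a: "a \<in> (SIGMA m:{m. m \<in> S \<and> 1 \<le> m \<and> m < q}. Pow ({m<..<q} - S))"
    and b: "b \<in> (SIGMA m:{m. m \<in> S \<and> 1 \<le> m \<and> m < q}. Pow ({m<..<q} - S))"
    and e: "(\<lambda>(m,F). insert m (insert q F)) a = (\<lambda>(m,F). insert m (insert q F)) b"
  obtain m F where am: "a = (m,F)" by force
  obtain m' F' where bm: "b = (m',F')" by force
  have h: "m \<in> S" "m < q" "F \<subseteq> {m<..<q} - S" "m' \<in> S" "m' < q" "F' \<subseteq> {m'<..<q} - S"
    using a b am bm by auto
  have e': "insert m (insert q F) = insert m' (insert q F')" using e am bm by simp
  have m1: "m \<in> insert m' (insert q F')" using e' by (metis insertI1)
  have m2: "m' \<in> insert m (insert q F)" using e' by (metis insertI1)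
  have "m = m'"
  proof (rule ccontr)
    assume ne: "m \<noteq> m'"
    have "m \<noteq> q" using h(2) by simp
    have "m' \<noteq> q" using h(5) by simp
    then have "m \<in> F'" "m' \<in> F" using m1 m2 ne \<open>m \<noteq> q\<close> by auto
    then have "m' < m" "m < m'" using h(3,6) by auto
    then show False by simp
  qed
  moreover have "F = F'"
  proof -
    have n: "m \<notin> F" "q \<notin> F" "m \<notin> F'" "q \<notin> F'" using h \<open>m = m'\<close> by auto
    have "F = insert m (insert q F) - {m, q}" using n by auto
    also have "\<dots> = insert m' (insert q F') - {m, q}" using e' by simp
    also have "\<dots> = F'" using n \<open>m = m'\<close> by auto
    finally show ?thesis .
  qed
  ultimately show "a = b" using am bm by simp
qed

lemma W_ident:
  fixes q :: nat and S :: "nat set"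
  assumes q: "2 \<le> q" "q \<notin> S" and S: "1 \<in> S"
  shows "(\<Sum>R\<in>{R. validR q S R}. 1 / (\<Prod>f\<in>R - S - {q}. real f - 1)) = real q - 1"
proof -
  let ?g = "\<lambda>(m,F). insert m (insert q F)"
  let ?M = "{m. m \<in> S \<and> 1 \<le> m \<and> m < q}"
  let ?Sig = "SIGMA m:?M. Pow ({m<..<q} - S)"
  have finM: "finite ?M" by (rule finite_subset[of _ "{..<q}"]) auto
  have "(\<Sum>R\<in>{R. validR q S R}. 1 / (\<Prod>f\<in>R - S - {q}. real f - 1))
      = (\<Sum>R\<in>?g ` ?Sig. 1 / (\<Prod>f\<in>R - S - {q}. real f - 1))" using valid_image[OF q(2)] by simp
  also have "\<dots> = (\<Sum>x\<in>?Sig. 1 / (\<Prod>f\<in>?g x - S - {q}. real f - 1))"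
    by (rule sum.reindex[OF valid_inj[OF q(2)], unfolded comp_def])
  also have "\<dots> = (\<Sum>x\<in>?Sig. 1 / (\<Prod>f\<in>snd x. real f - 1))"
  proof (rule sum.cong[OF refl])
    fix x assume "x \<in> ?Sig"
    then obtain m F where x: "x = (m,F)" "m \<in> S" "F \<subseteq> {m<..<q} - S" by auto
    then have "?g x - S - {q} = F" using q(2) by auto
    then show "1 / (\<Prod>f\<in>?g x - S - {q}. real f - 1) = 1 / (\<Prod>f\<in>snd x. real f - 1)" using x by simp
  qed
  also have "\<dots> = (\<Sum>m\<in>?M. \<Sum>F\<in>Pow ({m<..<q} - S). 1 / (\<Prod>f\<in>F. real f - 1))"
    by (rule sum.Sigma[symmetric, unfolded split_def]) (use finM in auto)
  also have "\<dots> = (\<Sum>m\<in>?M. \<Prod>a\<in>{m<..<q} - S. real a / (real a - 1))"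
    by (rule sum.cong[OF refl], rule pow_sum) auto
  also have "\<dots> = real q - 1" by (rule H_ident[OF q(1) S])
  finally show ?thesis .
qed

lemma Aok_one:
  assumes S: "1 \<in> S" shows "{C. Aok 1 S C} = {{(1,1)}}"
proof (intro set_eqI iffI)
  fix C assume "C \<in> {C. Aok 1 S C}"
  then have A: "Aok 1 S C" by simp
  have a: "(1,1) \<in> C" using Aok_leaf[OF A, of 1] by simp
  have b: "C \<subseteq> {(1,1)}"
  proof
    fix q assume q: "q \<in> C"
    obtain x y where xy: "q = (x,y)" by force
    have "1 \<le> x \<and> 1 \<le> y \<and> x + y \<le> Suc 1" using Aok_sub[OF A] q xy by blast
    then have "x = 1" "y = 1" by linarith+
    then show "q \<in> {(1,1)}" using xy by simp
  qed
  from a b have "C = {(1,1)}" by blast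
  then show "C \<in> {{(1,1)}}" by simp
next
  fix C :: "(nat \<times> nat) set" assume "C \<in> {{(1,1)}}"
  then have C: "C = {(1,1)}" by simp
  have "Aok 1 S {(1,1)}"
  proof (rule AokI)
    fix i j assume "(i,j) \<in> {(1::nat,1::nat)}"
    then have ij: "i = 1" "j = 1" by auto
    then show "1 \<le> i \<and> 1 \<le> j \<and> i + j \<le> Suc 1" by simp
    have n1: "\<not> (\<exists>j'<j. (i,j') \<in> {(1::nat,1::nat)})" using ij by blast
    have n2: "j \<in> S" using ij S by simp
    show "(\<exists>j'<j. (i,j') \<in> {(1,1)}) \<noteq> (j \<in> S \<or> (\<exists>i'<i. (i',j) \<in> {(1,1)}))" using n1 n2 by blast
  next
    fix i :: nat assume "1 \<le> i" "i \<le> 1"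
    then have "i = 1" by simp
    then show "(i, Suc 1 - i) \<in> {(1,1)}" by simp
  qed
  then show "C \<in> {C. Aok 1 S C}" using C by simp
qed

lemma prod_pos:
  fixes X :: "nat set"
  shows "(\<Prod>s\<in>X \<inter> {2..p}. real s - 1) > 0"
  by (rule prod_pos) auto

lemma card_Aok_formula:
  fixes p :: nat
  assumes p: "1 \<le> p"
  shows "1 \<in> S \<Longrightarrow> real (card {C. Aok p S C}) * (\<Prod>s\<in>S \<inter> {2..p}. real s - 1) = fact (p - 1)"
  using p
proof (induction p arbitrary: S rule: nat_induct_at_least)
  case base
  have "S \<inter> {2..1} = ({}::nat set)" by auto
  then show ?case using Aok_one[OF base] by simp
next
  case (Suc p)
  note S = Suc.prems
  let ?P = "\<lambda>X::nat set. (\<Prod>s\<in>X \<inter> {2..p}. real s - 1)"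
  have cardX: "\<And>X. 1 \<in> X \<Longrightarrow> real (card {C. Aok p X C}) = fact (p - 1) / ?P X"
  proof -
    fix X :: "nat set" assume "1 \<in> X"
    from Suc.IH[OF this] have "real (card {C. Aok p X C}) * ?P X = fact (p - 1)" .
    moreover have "?P X > 0" by (rule prod_pos)
    ultimately show "real (card {C. Aok p X C}) = fact (p - 1) / ?P X" by (simp add: field_simps)
  qed
  have rec: "card {C. Aok (Suc p) S C} = (\<Sum>R\<in>{R. validR (Suc p) S R}. card {C. Aok p (S \<union> R) C})"
    using card_Aok_rec[of "Suc p" S] Suc.hyps by simp
  have finV: "finite {R. validR (Suc p) S R}"
    by (rule finite_subset[of _ "Pow {1..Suc p}"]) (auto simp: validR_def)
  show ?case
  proof (cases "Suc p \<in> S")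
    case True
    have V: "{R. validR (Suc p) S R} = {{Suc p}}"
    proof (intro set_eqI iffI)
      fix R assume "R \<in> {R. validR (Suc p) S R}"
      then have R: "R \<subseteq> {1..Suc p}" "Suc p \<in> R" "Min R \<in> S" "\<forall>j\<in>R. j \<noteq> Min R \<longrightarrow> j \<notin> S" unfolding validR_def by auto
      have fin: "finite R" using R(1) finite_subset by blast
      have "Min R = Suc p"
      proof (rule ccontr)
        assume "Min R \<noteq> Suc p"
        then have "Suc p \<noteq> Min R" by simp
        then have "Suc p \<notin> S" using R(2) R(4) by blast
        then show False using True by simp
      qed
      have "R = {Suc p}"
      proof (intro set_eqI iffI)
        fix j assume j: "j \<in> R"
        then have "Min R \<le> j" using fin by simp
        moreover have "j \<le> Suc p" using j R(1) by auto
        ultimately show "j \<in> {Suc p}" using \<open>Min R = Suc p\<close> by simp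
      next
        fix j assume "j \<in> {Suc p}" then show "j \<in> R" using R(2) by simp
      qed
      then show "R \<in> {{Suc p}}" by simp
    next
      fix R assume "R \<in> {{Suc p}}"
      then show "R \<in> {R. validR (Suc p) S R}" using True by (auto simp: validR_def)
    qed
    have e1: "(S \<union> {Suc p}) \<inter> {2..p} = S \<inter> {2..p}" by auto
    have e2: "S \<inter> {2..Suc p} = insert (Suc p) (S \<inter> {2..p})" using True Suc.hyps by auto
    have "real (card {C. Aok (Suc p) S C}) = fact (p - 1) / ?P S"
      using rec V cardX[of "S \<union> {Suc p}"] S e1 by simp
    moreover have "(\<Prod>s\<in>S \<inter> {2..Suc p}. real s - 1) = real p * ?P S" unfolding e2 by simp
    moreover have "?P S > 0" by (rule prod_pos)
    moreover have "fact (Suc p - 1) = real p * fact (p - 1)" using Suc.hyps fact_reduce[of p, where 'a = real] by simp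
    ultimately show ?thesis by (simp add: field_simps)
  next
    case False
    have e2: "S \<inter> {2..Suc p} = S \<inter> {2..p}" using False by (auto simp: le_Suc_eq)
    have each: "real (card {C. Aok p (S \<union> R) C}) * ?P S = fact (p - 1) * (1 / (\<Prod>f\<in>R - S - {Suc p}. real f - 1))"
      if R: "R \<in> {R. validR (Suc p) S R}" for R
    proof -
      have Rv: "R \<subseteq> {1..Suc p}" "Suc p \<in> R" "Min R \<in> S" "\<forall>j\<in>R. j \<noteq> Min R \<longrightarrow> j \<notin> S"
        using R unfolding validR_def by auto
      have fin: "finite R" using Rv(1) finite_subset by blast
      have mR: "Min R \<in> R" using Min_in[OF fin] Rv(2) by blast
      have m1: "1 \<le> Min R" using Rv(1) mR by auto
      have sub: "R - S - {Suc p} \<subseteq> {2..p}"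
      proof
        fix f assume f: "f \<in> R - S - {Suc p}"
        then have a: "f \<noteq> Min R" using Rv(3) by auto
        have b: "Min R \<le> f" using fin f by simp
        have c: "f \<le> Suc p" "f \<noteq> Suc p" using f Rv(1) by auto
        show "f \<in> {2..p}" using a b c m1 by simp
      qed
      have un: "(S \<union> R) \<inter> {2..p} = (S \<inter> {2..p}) \<union> (R - S - {Suc p})" using sub by auto
      have dj: "(S \<inter> {2..p}) \<inter> (R - S - {Suc p}) = {}" by blast
      have "?P (S \<union> R) = ?P S * (\<Prod>f\<in>R - S - {Suc p}. real f - 1)"
        unfolding un by (rule prod.union_disjoint[OF _ _ dj]) (use fin in simp_all)
      moreover have "(\<Prod>f\<in>R - S - {Suc p}. real f - 1) > 0"
      proof (rule Groups_Big.prod_pos)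
        fix f assume "f \<in> R - S - {Suc p}"
        then have "2 \<le> f" using sub by auto
        then show "0 < real f - 1" by simp
      qed
      moreover have "?P S > 0" by (rule prod_pos)
      moreover have "1 \<in> S \<union> R" using S by simp
      ultimately show ?thesis using cardX[of "S \<union> R"] by (simp add: field_simps)
    qed
    have "real (card {C. Aok (Suc p) S C}) * (\<Prod>s\<in>S \<inter> {2..Suc p}. real s - 1)
        = (\<Sum>R\<in>{R. validR (Suc p) S R}. real (card {C. Aok p (S \<union> R) C}) * ?P S)"
      unfolding rec e2 by (simp add: sum_distrib_right)
    also have "\<dots> = (\<Sum>R\<in>{R. validR (Suc p) S R}. fact (p - 1) * (1 / (\<Prod>f\<in>R - S - {Suc p}. real f - 1)))"
      by (rule sum.cong[OF refl]) (rule each)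
    also have "\<dots> = fact (p - 1) * (\<Sum>R\<in>{R. validR (Suc p) S R}. 1 / (\<Prod>f\<in>R - S - {Suc p}. real f - 1))"
      by (simp only: sum_distrib_left)
    also have "(\<Sum>R\<in>{R. validR (Suc p) S R}. 1 / (\<Prod>f\<in>R - S - {Suc p}. real f - 1)) = real (Suc p) - 1"
      by (rule W_ident) (use Suc.hyps False S in simp_all)
    also have "fact (p - 1) * (real (Suc p) - 1) = fact (Suc p - 1)" using Suc.hyps fact_reduce[of p, where 'a = real] by (simp add: mult.commute)
    finally show ?thesis .
  qed
qed


lemma alg:
  fixes a :: "nat \<Rightarrow> int"
  assumes "2 \<le> m"
  shows "int m * (\<Sum>j<m. a j) - (\<Sum>k<m. \<Sum>j\<in>{k-1..<m}. a j) = (\<Sum>j<m-2. int (m-2-j) * a j)"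
  using assms
proof (induction m rule: nat_induct_at_least)
  case base
  have e: "{..<2::nat} = {0,1}" by auto
  have e2: "{0::nat..<2} = {0,1}" by auto
  show ?case by (simp add: e e2)
next
  case (Suc m)
  let ?S = "\<Sum>j<m. a j"
  have s1: "(\<Sum>j<Suc m. a j) = ?S + a m" by simp
  have in1: "\<And>k. k < m \<Longrightarrow> (\<Sum>j\<in>{k-1..<Suc m}. a j) = (\<Sum>j\<in>{k-1..<m}. a j) + a m"
  proof -
    fix k assume "k < m"
    then have "{k-1..<Suc m} = insert m {k-1..<m}" by auto
    moreover have "m \<notin> {k-1..<m}" by simp
    ultimately show "(\<Sum>j\<in>{k-1..<Suc m}. a j) = (\<Sum>j\<in>{k-1..<m}. a j) + a m"
      using sum.insert[of "{k-1..<m}" m a] by (simp add: add.commute)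
  qed
  have s2: "(\<Sum>k<Suc m. \<Sum>j\<in>{k-1..<Suc m}. a j) = (\<Sum>k<m. \<Sum>j\<in>{k-1..<m}. a j) + int m * a m + (\<Sum>j\<in>{m-1..<Suc m}. a j)"
  proof -
    have "(\<Sum>k<Suc m. \<Sum>j\<in>{k-1..<Suc m}. a j) = (\<Sum>k<m. \<Sum>j\<in>{k-1..<Suc m}. a j) + (\<Sum>j\<in>{m-1..<Suc m}. a j)"
      by simp
    also have "(\<Sum>k<m. \<Sum>j\<in>{k-1..<Suc m}. a j) = (\<Sum>k<m. (\<Sum>j\<in>{k-1..<m}. a j) + a m)"
      by (rule sum.cong[OF refl], rule in1) simp
    also have "\<dots> = (\<Sum>k<m. \<Sum>j\<in>{k-1..<m}. a j) + int m * a m" by (simp add: sum.distrib)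
    finally show ?thesis .
  qed
  have s3: "(\<Sum>j\<in>{m-1..<Suc m}. a j) = a (m-1) + a m"
  proof -
    have "{m-1..<Suc m} = {m-1, m}" using Suc.hyps by auto
    moreover have "m - 1 \<noteq> m" using Suc.hyps by auto
    ultimately show ?thesis by simp
  qed
  have s4: "?S = (\<Sum>j<m-1. a j) + a (m-1)"
  proof -
    have "{..<m} = insert (m-1) {..<m-1}" using Suc.hyps by auto
    then show ?thesis by simp
  qed
  have r1: "(\<Sum>j<Suc m-2. int (Suc m-2-j) * a j) = (\<Sum>j<m-2. int (m-2-j) * a j) + (\<Sum>j<m-1. a j)"
  proof -
    have "Suc m - 2 = Suc (m - 2)" using Suc.hyps by auto
    then have "(\<Sum>j<Suc m-2. int (Suc m-2-j) * a j) = (\<Sum>j<m-2. int (Suc m-2-j) * a j) + int (Suc m - 2 - (m-2)) * a (m-2)"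
      by simp
    also have "int (Suc m - 2 - (m-2)) = 1" using Suc.hyps by auto
    also have "(\<Sum>j<m-2. int (Suc m-2-j) * a j) = (\<Sum>j<m-2. int (m-2-j) * a j + a j)"
      by (rule sum.cong[OF refl]) (auto simp: algebra_simps of_nat_diff)
    also have "\<dots> = (\<Sum>j<m-2. int (m-2-j) * a j) + (\<Sum>j<m-2. a j)" by (simp add: sum.distrib)
    also have "(\<Sum>j<m-1. a j) = (\<Sum>j<m-2. a j) + a (m-2)"
    proof -
      have "{..<m-1} = insert (m-2) {..<m-2}" using Suc.hyps by auto
      then show ?thesis by simp
    qed
    ultimately show ?thesis by simp
  qed
  show ?case
    unfolding s1 s2 s3 r1 using Suc.IH s4 by (simp add: algebra_simps)
qed

lemma sum_int_range:
  fixes g :: "int \<Rightarrow> 'a::comm_monoid_add"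
  shows "(\<Sum>j\<in>{int a..int b}. g j) = (\<Sum>j\<in>{a..b}. g (int j))"
proof -
  have "(\<Sum>j\<in>{int a..int b}. g j) = (\<Sum>j\<in>int ` {a..b}. g j)" by (simp add: image_int_atLeastAtMost)
  also have "\<dots> = (\<Sum>j\<in>{a..b}. g (int j))" by (rule sum.reindex_cong[of int]) (auto simp: inj_on_def)
  finally show ?thesis .
qed

lemma sum_int_range0:
  fixes g :: "int \<Rightarrow> 'a::comm_monoid_add"
  shows "(\<Sum>j\<in>{0..<int b}. g j) = (\<Sum>j<b. g (int j))"
proof -
  have "(\<Sum>j\<in>{0..<int b}. g j) = (\<Sum>j\<in>int ` {0..<b}. g j)" by (simp add: image_int_atLeastLessThan)
  also have "\<dots> = (\<Sum>j\<in>{0..<b}. g (int j))" by (rule sum.reindex_cong[of int]) (auto simp: inj_on_def)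
  finally show ?thesis by (simp add: atLeast0LessThan)
qed

lemma Qfin: "finite {T. Q n T}"
proof (rule finite_subset)
  show "{T. Q n T} \<subseteq> Pow ({1..n} \<times> {1..n})"
  proof
    fix T assume "T \<in> {T. Q n T}"
    then have A: "Q n T" by simp
    show "T \<in> Pow ({1..n} \<times> {1..n})"
    proof (rule PowI, rule subsetI)
      fix q assume q: "q \<in> T"
      obtain x y where xy: "q = (x,y)" by force
      have "1 \<le> x \<and> 1 \<le> y \<and> x + y \<le> Suc n" using Q_sub[OF A] q xy by blast
      then show "q \<in> {1..n} \<times> {1..n}" using xy by auto
    qed
  qed
qed simp

definition G :: "nat \<Rightarrow> nat \<Rightarrow> nat" where
  "G n j = card {T. Q n T \<and> (\<forall>i\<in>{1..j}. (i, n - i) \<notin> T)}"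
definition Fk :: "nat \<Rightarrow> nat \<Rightarrow> nat" where
  "Fk n j = card {T. Q n T \<and> (\<forall>i\<in>{1..j}. (i, n - i) \<notin> T) \<and> (j + 1, n - j - 1) \<in> T}"

lemma f_Fk: "j + 2 \<le> n \<Longrightarrow> f n (int j) = Fk n j"
  unfolding f_def Fk_def by (simp add: UD_iff)

lemma f_last: "1 \<le> n \<Longrightarrow> f n (int n - 1) = G n (n - 1)"
  unfolding f_def G_def by (simp add: UD_iff)

lemma f_m1: "f n (-1) = 0"
  unfolding f_def by simp

lemma G_split: "G n j = Fk n j + G n (Suc j)"
proof -
  let ?A = "{T. Q n T \<and> (\<forall>i\<in>{1..j}. (i, n - i) \<notin> T) \<and> (j + 1, n - j - 1) \<in> T}"
  let ?B = "{T. Q n T \<and> (\<forall>i\<in>{1..Suc j}. (i, n - i) \<notin> T)}"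
  have e: "{T. Q n T \<and> (\<forall>i\<in>{1..j}. (i, n - i) \<notin> T)} = ?A \<union> ?B"
  proof (intro set_eqI iffI)
    fix T assume "T \<in> {T. Q n T \<and> (\<forall>i\<in>{1..j}. (i, n - i) \<notin> T)}"
    then show "T \<in> ?A \<union> ?B" by (auto simp: le_Suc_eq)
  next
    fix T assume "T \<in> ?A \<union> ?B"
    then show "T \<in> {T. Q n T \<and> (\<forall>i\<in>{1..j}. (i, n - i) \<notin> T)}" by auto
  qed
  have d: "?A \<inter> ?B = {}" by auto
  have fA: "finite ?A" by (rule finite_subset[OF _ Qfin]) auto
  have fB: "finite ?B" by (rule finite_subset[OF _ Qfin]) auto
  show ?thesis unfolding G_def Fk_def e using card_Un_disjoint[OF fA fB d] by simp
qed

lemma total: "1 \<le> n \<Longrightarrow> G n 0 = fact (n - 1)"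
proof -
  assume n: "1 \<le> n"
  have "G n 0 = card {T. Q n T}" unfolding G_def by simp
  also have "{T. Q n T} = {C. Aok n {1} C}" using Q_Aok[OF n] by simp
  finally have g: "G n 0 = card {C. Aok n {1} C}" .
  have "{1::nat} \<inter> {2..n} = {}" by auto
  then have "real (card {C. Aok n {1} C}) = fact (n - 1)"
    using card_Aok_formula[OF n, of "{1}"] by simp
  then have "real (G n 0) = real (fact (n - 1))" using g by (simp add: of_nat_fact)
  then show ?thesis by (simp only: of_nat_eq_iff)
qed

lemma sumG:
  assumes m: "1 \<le> m" and a: "a \<le> m - 1"
  shows "(\<Sum>j\<in>{a..m-1}. f m (int j)) = G m a"
  using a
proof (induction a rule: inc_induct)
  case base
  have "int (m - 1) = int m - 1" using m by simp
  then show ?case using f_last[OF m] by simp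
next
  case (step a)
  have "{a..m-1} = insert a {Suc a..m-1}" using step.hyps by auto
  then have "(\<Sum>j\<in>{a..m-1}. f m (int j)) = f m (int a) + (\<Sum>j\<in>{Suc a..m-1}. f m (int j))" by simp
  also have "f m (int a) = Fk m a" using step.hyps by (intro f_Fk) auto
  also have "(\<Sum>j\<in>{Suc a..m-1}. f m (int j)) = G m (Suc a)" by (rule step.IH)
  finally show ?case using G_split[of m a] by linarith
qed

lemma cherryG: "k < m \<Longrightarrow> Fk (Suc m) k = G m (k - 1)"
  unfolding Fk_def G_def using card_cherry by simp

theorem theorem4p6:
  fixes n :: nat
  assumes "n \<ge> 3"
  shows "(\<forall>k::int. 0 \<le> k \<and> k < int n - 1 \<longrightarrow>
            f n k = (\<Sum>j \<in> {k - 1 .. int n - 2}. f (n - 1) j))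
       \<and> int (f n (int n - 1)) =
            (\<Sum>j \<in> {0 .. int n - 4}. (int n - 3 - j) * int (f (n - 1) j))"
proof -
  define m where "m = n - 1"
  have nm: "n = Suc m" and m2: "2 \<le> m" using assms unfolding m_def by auto
  have im: "int (m - 1) = int n - 2" using nm m2 by simp
  have P1: "\<forall>k::int. 0 \<le> k \<and> k < int n - 1 \<longrightarrow> f n k = (\<Sum>j \<in> {k - 1 .. int n - 2}. f (n - 1) j)"
  proof (intro allI impI)
    fix k :: int assume k: "0 \<le> k \<and> k < int n - 1"
    obtain k' where k': "k = int k'" using k zero_le_imp_eq_int by blast
    have km: "k' < m" using k k' nm by simp
    have L: "f n k = G m (k' - 1)"
    proof -
      have "f n k = Fk n k'" unfolding k' by (rule f_Fk) (use km nm in simp)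
      also have "\<dots> = G m (k' - 1)" unfolding nm by (rule cherryG[OF km])
      finally show ?thesis .
    qed
    have R: "(\<Sum>j \<in> {k - 1 .. int n - 2}. f (n - 1) j) = G m (k' - 1)"
    proof (cases "k' = 0")
      case True
      have e: "{k - 1 .. int n - 2} = insert (-1) {int 0..int (m - 1)}" using True k' im by auto
      have "(\<Sum>j \<in> {k - 1 .. int n - 2}. f (n - 1) j) = f m (-1) + (\<Sum>j \<in> {int 0..int (m - 1)}. f m j)"
        unfolding e m_def[symmetric] by (rule sum.insert) auto
      also have "\<dots> = (\<Sum>j \<in> {int 0..int (m - 1)}. f m j)" by (simp only: f_m1 add_0)
      also have "\<dots> = (\<Sum>j \<in> {0..m - 1}. f m (int j))" by (rule sum_int_range)
      also have "\<dots> = G m 0" by (rule sumG) (use m2 in auto)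
      finally show ?thesis using True by simp
    next
      case False
      have e: "{k - 1 .. int n - 2} = {int (k' - 1)..int (m - 1)}" using False k' im by auto
      have "(\<Sum>j \<in> {k - 1 .. int n - 2}. f (n - 1) j) = (\<Sum>j \<in> {k' - 1..m - 1}. f m (int j))"
        unfolding e m_def[symmetric] by (rule sum_int_range)
      also have "\<dots> = G m (k' - 1)" by (rule sumG) (use m2 km in auto)
      finally show ?thesis .
    qed
    show "f n k = (\<Sum>j \<in> {k - 1 .. int n - 2}. f (n - 1) j)" using L R by simp
  qed
  define a where "a = (\<lambda>j. int (f m (int j)))"
  have Gsum: "\<And>b. b \<le> m - 1 \<Longrightarrow> int (G m b) = (\<Sum>j\<in>{b..<m}. a j)"
  proof -
    fix b assume b: "b \<le> m - 1"
    have "G m b = (\<Sum>j\<in>{b..m - 1}. f m (int j))" by (rule sumG[symmetric]) (use m2 b in auto)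
    moreover have "{b..m - 1} = {b..<m}" using m2 by auto
    ultimately show "int (G m b) = (\<Sum>j\<in>{b..<m}. a j)" unfolding a_def by simp
  qed
  have tot: "G n 0 = (\<Sum>j<m. f n (int j)) + G n (n - 1)"
  proof -
    have "G n 0 = (\<Sum>j\<in>{0..n - 1}. f n (int j))" by (rule sumG[symmetric]) (use nm in auto)
    also have "{0..n - 1} = insert m {..<m}" using nm by auto
    also have "(\<Sum>j\<in>insert m {..<m}. f n (int j)) = f n (int m) + (\<Sum>j<m. f n (int j))" by simp
    also have "int m = int n - 1" using nm by simp
    also have "f n (int n - 1) = G n (n - 1)" by (rule f_last) (use nm in simp)
    finally show ?thesis by simp
  qed
  have fnj: "\<And>j. j < m \<Longrightarrow> f n (int j) = G m (j - 1)"
  proof -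
    fix j assume j: "j < m"
    have "f n (int j) = Fk n j" by (rule f_Fk) (use j nm in simp)
    then show "f n (int j) = G m (j - 1)" using cherryG[OF j] nm by simp
  qed
  have fct: "G n 0 = m * G m 0"
  proof -
    have "G n 0 = fact m" using total[of n] nm by simp
    also have "\<dots> = m * fact (m - 1)" using m2 fact_reduce[of m, where 'a = nat] by simp
    also have "fact (m - 1) = G m 0" using total[of m] m2 by simp
    finally show ?thesis .
  qed
  have P2: "int (f n (int n - 1)) = (\<Sum>j \<in> {0 .. int n - 4}. (int n - 3 - j) * int (f (n - 1) j))"
  proof -
    have "int (f n (int n - 1)) = int (G n (n - 1))" using f_last[of n] nm by simp
    also have "\<dots> = int m * int (G m 0) - (\<Sum>j<m. int (G m (j - 1)))"
    proof -
      have "(\<Sum>j<m. f n (int j)) = (\<Sum>j<m. G m (j - 1))" by (rule sum.cong[OF refl]) (simp add: fnj)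
      then have "G n 0 = (\<Sum>j<m. G m (j - 1)) + G n (n - 1)" using tot by simp
      then have "int (G n 0) = int (\<Sum>j<m. G m (j - 1)) + int (G n (n - 1))" by simp
      then have "int (G n 0) = (\<Sum>j<m. int (G m (j - 1))) + int (G n (n - 1))"
        by (simp only: of_nat_sum)
      then show ?thesis using fct by simp
    qed
    also have "\<dots> = int m * (\<Sum>j<m. a j) - (\<Sum>k<m. \<Sum>j\<in>{k-1..<m}. a j)"
    proof -
      have "int (G m 0) = (\<Sum>j<m. a j)" using Gsum[of 0] by (simp add: atLeast0LessThan)
      moreover have "(\<Sum>j<m. int (G m (j - 1))) = (\<Sum>k<m. \<Sum>j\<in>{k-1..<m}. a j)"
        by (rule sum.cong[OF refl]) (rule Gsum, auto)
      ultimately show ?thesis by simp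
    qed
    also have "\<dots> = (\<Sum>j<m-2. int (m-2-j) * a j)" by (rule alg[OF m2])
    also have "\<dots> = (\<Sum>j<m-2. (int n - 3 - int j) * int (f (n - 1) (int j)))"
      by (rule sum.cong[OF refl]) (auto simp: a_def m_def[symmetric] nm of_nat_diff)
    also have "\<dots> = (\<Sum>j\<in>{0..<int (m-2)}. (int n - 3 - j) * int (f (n - 1) j))"
      by (rule sum_int_range0[symmetric])
    also have "{0..<int (m-2)} = {0 .. int n - 4}" using nm m2 by auto
    finally show ?thesis .
  qed
  show ?thesis using P1 P2 by blast
qed

end
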